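(* Let $(V,E)$ be a digraph with $V$ countably infinite, $\mu_1,\mu_2$ probability measures on $V$, and $Q$ a finitely decomposable acyclic flow on $(V,E)$ with $\operatorname{div}Q=\mu_1-\mu_2$. Then there exists a coupling $\rho$ between $\mu_1$ and $\mu_2$ such that, for each ordered pair $x\ne y$, there are countably many directed paths $\gamma^i_{(x,y)}$ in $(V,E)$ from $x$ to $y$ and weights $\rho^i(x,y)\ge0$ with $\sum_i\rho^i(x,y)=\rho(x,y)$ and $Q=\sum_{x\neq y}\sum_i\rho^i(x,y)Q_{\gamma^i_{(x,y)}}$ pointwise, and moreover $\sum_{x\neq y}\rho(x,y)=\frac12\sum_x|\mu_1(x)-\mu_2(x)|$.
   Context: A flow on $(V,E)$ is a map $Q:E\to[0,+\infty)$, with $\operatorname{div}Q(x)=\sum_{y:(x,y)\in E}Q(x,y)-\sum_{y:(y,x)\in E}Q(y,x)$; $Q$ is acyclic if the digraph of edges with $Q>0$ has no directed cycle. For a directed path $\gamma=(x_0,\dots,x_n)$, $Q_\gamma(x,y)=1$ if $(x,y)=(x_i,x_{i+1})$ for some $i$, $0$ otherwise. $Q$ is finitely decomposable if $Q=\sum_nq_nQ_{\gamma_n}$ pointwise for a countable family of finite self-avoiding directed paths $\gamma_n$ and weights $q_n\ge0$ with $\sum_nq_n<\infty$. A coupling is a probability measure on $V\times V$ with marginals $\mu_1,\mu_2$. *)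

theory Defs
  imports "HOL-Analysis.Analysis"
begin

definition dpath :: "'v set \<Rightarrow> ('v \<times> 'v) set \<Rightarrow> 'v list \<Rightarrow> bool" where
  "dpath V E \<gamma> \<longleftrightarrow> \<gamma> \<noteq> [] \<and> set \<gamma> \<subseteq> V \<and>
     (\<forall>i. Suc i < length \<gamma> \<longrightarrow> (\<gamma> ! i, \<gamma> ! Suc i) \<in> E)"

definition sa_dpath :: "'v set \<Rightarrow> ('v \<times> 'v) set \<Rightarrow> 'v list \<Rightarrow> bool" where
  "sa_dpath V E \<gamma> \<longleftrightarrow> dpath V E \<gamma> \<and> distinct \<gamma>"

definition path_flow :: "'v list \<Rightarrow> 'v \<times> 'v \<Rightarrow> real" where
  "path_flow \<gamma> e = (if \<exists>i. Suc i < length \<gamma> \<and> e = (\<gamma> ! i, \<gamma> ! Suc i) then 1 else 0)"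

definition is_flow :: "('v \<times> 'v) set \<Rightarrow> ('v \<times> 'v \<Rightarrow> real) \<Rightarrow> bool" where
  "is_flow E Q \<longleftrightarrow> (\<forall>e\<in>E. Q e \<ge> 0)"

definition divergence :: "('v \<times> 'v) set \<Rightarrow> ('v \<times> 'v \<Rightarrow> real) \<Rightarrow> 'v \<Rightarrow> real" where
  "divergence E Q x = (\<Sum>\<^sub>\<infinity>y\<in>{y. (x,y) \<in> E}. Q (x,y)) - (\<Sum>\<^sub>\<infinity>y\<in>{y. (y,x) \<in> E}. Q (y,x))"

definition acyclic_flow :: "('v \<times> 'v) set \<Rightarrow> ('v \<times> 'v \<Rightarrow> real) \<Rightarrow> bool" where
  "acyclic_flow E Q \<longleftrightarrow> acyclic {e\<in>E. Q e > 0}"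

definition finitely_decomposable :: "'v set \<Rightarrow> ('v \<times> 'v) set \<Rightarrow> ('v \<times> 'v \<Rightarrow> real) \<Rightarrow> bool" where
  "finitely_decomposable V E Q \<longleftrightarrow>
     (\<exists>(\<gamma> :: nat \<Rightarrow> 'v list) (q :: nat \<Rightarrow> real).
        (\<forall>n. q n \<ge> 0 \<and> sa_dpath V E (\<gamma> n)) \<and> summable q \<and>
        (\<forall>e\<in>E. (\<lambda>n. q n * path_flow (\<gamma> n) e) sums Q e))"

definition prob_fun :: "'v set \<Rightarrow> ('v \<Rightarrow> real) \<Rightarrow> bool" where
  "prob_fun V \<mu> \<longleftrightarrow> (\<forall>x\<in>V. \<mu> x \<ge> 0) \<and> (\<mu> has_sum 1) V"

definition coupling :: "'v set \<Rightarrow> ('v \<Rightarrow> real) \<Rightarrow> ('v \<Rightarrow> real) \<Rightarrow> ('v \<times> 'v \<Rightarrow> real) \<Rightarrow> bool" where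
  "coupling V \<mu>1 \<mu>2 \<rho> \<longleftrightarrow> prob_fun (V \<times> V) \<rho> \<and>
     (\<forall>x\<in>V. ((\<lambda>y. \<rho> (x,y)) has_sum \<mu>1 x) V) \<and>
     (\<forall>y\<in>V. ((\<lambda>x. \<rho> (x,y)) has_sum \<mu>2 y) V)"

end

theory Submission
  imports Defs
begin


definition ssum :: "('a \<Rightarrow> ennreal) \<Rightarrow> ennreal" where
  "ssum f = (\<integral>\<^sup>+ x. f x \<partial>count_space UNIV)"

lemma ssum_add: "ssum (\<lambda>x. f x + g x) = ssum f + ssum g"
  unfolding ssum_def by (rule nn_integral_add) auto

lemma ssum_cmult_left: "ssum (\<lambda>x. c * f x) = c * ssum f"
  unfolding ssum_def by (rule nn_integral_cmult) auto

lemma ssum_cmult_right: "ssum (\<lambda>x. f x * c) = ssum f * c"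
  using ssum_cmult_left[of c f] by (simp add: mult.commute)

lemma ssum_mono: "(\<And>x. f x \<le> g x) \<Longrightarrow> ssum f \<le> ssum g"
  unfolding ssum_def by (rule nn_integral_mono) auto

lemma ssum_cong: "(\<And>x. f x = g x) \<Longrightarrow> ssum f = ssum g"
  by (metis ext)

lemma ssum_pair: "ssum (\<lambda>x. ssum (\<lambda>y. f (x,y))) = ssum f"
  unfolding ssum_def by (rule nn_integral_fst_count_space)

lemma ssum_pair': "ssum (\<lambda>p. f (fst p) (snd p)) = ssum (\<lambda>x. ssum (\<lambda>y. f x y))"
  using ssum_pair[of "\<lambda>p. f (fst p) (snd p)"] by simp

lemma ssum_swap: "ssum (\<lambda>x. ssum (\<lambda>y. f x y)) = ssum (\<lambda>y. ssum (\<lambda>x. f x y))"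
proof -
  have "ssum (\<lambda>x. ssum (\<lambda>y. f x y)) = ssum (\<lambda>p. f (fst p) (snd p))"
    using ssum_pair[of "\<lambda>p. f (fst p) (snd p)"] by simp
  also have "\<dots> = ssum (\<lambda>p. f (snd p) (fst p))"
  proof -
    have "(\<integral>\<^sup>+ p. f (snd (prod.swap p)) (fst (prod.swap p)) \<partial>count_space UNIV) = (\<integral>\<^sup>+ p. f (snd p) (fst p) \<partial>count_space UNIV)"
      by (rule nn_integral_bij_count_space) (auto simp: bij_betw_def)
    then show ?thesis unfolding ssum_def by simp
  qed
  also have "\<dots> = ssum (\<lambda>y. ssum (\<lambda>x. f x y))"
    using ssum_pair[of "\<lambda>p. f (snd p) (fst p)"] by simp
  finally show ?thesis .
qed

lemma ssum_single: "ssum (\<lambda>x. if x = a then f x else 0) = f a"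
  unfolding ssum_def by (subst nn_integral_count_space'[of "{a}"]) auto

lemma ssum_single': "ssum (\<lambda>x. if a = x then f x else 0) = f a"
  using ssum_single[of a f] by (simp add: eq_commute)

lemma ssum_single_mult1: "ssum (\<lambda>x. f x * (if x = a then 1 else 0)) = f a"
  by (subst ssum_cong[where g="\<lambda>x. if x = a then f x else 0"]) (auto simp: ssum_single)

lemma ssum_single_mult2: "ssum (\<lambda>x. (if x = a then 1 else 0) * f x) = f a"
  by (subst ssum_cong[where g="\<lambda>x. if x = a then f x else 0"]) (auto simp: ssum_single)

lemma ssum_single_mult1': "ssum (\<lambda>x. f x * (if a = x then 1 else 0)) = f a"
  by (subst ssum_cong[where g="\<lambda>x. if x = a then f x else 0"]) (auto simp: ssum_single)

lemma ssum_single_mult2': "ssum (\<lambda>x. (if a = x then 1 else 0) * f x) = f a"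
  by (subst ssum_cong[where g="\<lambda>x. if x = a then f x else 0"]) (auto simp: ssum_single)

lemma ssum_zero[simp]: "ssum (\<lambda>x. 0) = 0"
  unfolding ssum_def by simp

lemma ssum_suminf: "ssum (\<lambda>x. \<Sum>k. f k x) = (\<Sum>k. ssum (f k))"
  unfolding ssum_def by (rule nn_integral_suminf) auto

lemma ssum_sum: "finite I \<Longrightarrow> ssum (\<lambda>x. \<Sum>k\<in>I. f k x) = (\<Sum>k\<in>I. ssum (f k))"
  unfolding ssum_def by (rule nn_integral_sum) auto

lemma ssum_nat: "ssum (f :: nat \<Rightarrow> ennreal) = suminf f"
  unfolding ssum_def by (rule nn_integral_count_space_nat)

lemma ssum_reindex:
  assumes "inj g" "\<And>y. y \<notin> range g \<Longrightarrow> f y = 0"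
  shows "ssum (\<lambda>x. f (g x)) = ssum f"
proof -
  have "(\<integral>\<^sup>+ x. f (g x) \<partial>count_space UNIV) = (\<integral>\<^sup>+ y. f y \<partial>count_space (range g))"
    by (rule nn_integral_bij_count_space) (use assms in \<open>auto simp: bij_betw_def\<close>)
  also have "\<dots> = (\<integral>\<^sup>+ y. f y * indicator (range g) y \<partial>count_space UNIV)"
    by (subst nn_integral_count_space_indicator) auto
  also have "\<dots> = (\<integral>\<^sup>+ y. f y \<partial>count_space UNIV)"
    by (rule nn_integral_cong) (use assms in \<open>auto split: split_indicator\<close>)
  finally show ?thesis unfolding ssum_def .
qed

lemma ssum_ge: "f a \<le> ssum f"
proof -
  have "f a = ssum (\<lambda>x. if x = a then f x else 0)" by (simp add: ssum_single)
  also have "\<dots> \<le> ssum f" by (rule ssum_mono) auto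
  finally show ?thesis .
qed

lemma ssum_eq_0_iff: "ssum f = 0 \<longleftrightarrow> (\<forall>x. f x = 0)"
proof
  assume "ssum f = 0" then show "\<forall>x. f x = 0" using ssum_ge[of f] by (metis le_zero_eq)
next
  assume "\<forall>x. f x = 0" then have "f = (\<lambda>x. 0)" by auto
  then show "ssum f = 0" by simp
qed

lemma ssum_bool: "ssum (\<lambda>b::bool. f b) = f True + f False"
proof -
  have "ssum f = (\<Sum>b\<in>UNIV. f b)" unfolding ssum_def by (rule nn_integral_count_space_finite) simp
  then show ?thesis by (simp add: UNIV_bool add.commute)
qed

lemma ssum_list_split: "ssum (f :: 'a list \<Rightarrow> ennreal) = f [] + ssum (\<lambda>p. f (fst p # snd p))"
proof -
  have "ssum f = ssum (\<lambda>x. (if x = [] then f x else 0) + (if x \<noteq> [] then f x else 0))"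
    by (rule ssum_cong) auto
  also have "\<dots> = f [] + ssum (\<lambda>x. if x \<noteq> [] then f x else 0)"
    by (simp add: ssum_add ssum_single)
  also have "ssum (\<lambda>x. if x \<noteq> [] then f x else 0) = ssum (\<lambda>p. f (fst p # snd p))"
  proof -
    have "ssum (\<lambda>p. (\<lambda>x. if x \<noteq> [] then f x else 0) ((\<lambda>p. fst p # snd p) p)) = ssum (\<lambda>x. if x \<noteq> [] then f x else 0)"
      by (rule ssum_reindex) (auto simp: inj_def neq_Nil_conv image_iff)
    then show ?thesis by simp
  qed
  finally show ?thesis .
qed

lemma ssum_by_length: "ssum (f :: 'a list \<Rightarrow> ennreal) = (\<Sum>k. ssum (\<lambda>u. if length u = k then f u else 0))"
proof -
  have "ssum f = ssum (\<lambda>u. \<Sum>k. if length u = k then f u else 0)"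
  proof (rule ssum_cong)
    fix u
    have "(\<Sum>k. if length u = k then f u else 0) = (\<Sum>k\<in>{length u}. if length u = k then f u else 0)"
      by (rule suminf_finite) auto
    then show "f u = (\<Sum>k. if length u = k then f u else 0)" by simp
  qed
  then show ?thesis by (simp add: ssum_suminf)
qed



fun wP :: "(nat \<Rightarrow> nat \<Rightarrow> ennreal) \<Rightarrow> nat list \<Rightarrow> ennreal" where
  "wP P [] = 1" | "wP P [n] = 1" | "wP P (n # m # r) = P n m * wP P (m # r)"

lemma wP_append: "wP P (xs @ m # ys) = wP P (xs @ [m]) * wP P (m # ys)"
proof (induction xs)
  case Nil then show ?case by simp
next
  case (Cons a xs) then show ?case by (cases xs) (simp_all add: mult.assoc)
qed

lemma wP_Cons2: "wP P (n # l # v) = P n l * wP P (l # v)" by simp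

locale chainsys =
  fixes N :: "nat set" and P :: "nat \<Rightarrow> nat \<Rightarrow> ennreal" and \<iota> \<sigma> q :: "nat \<Rightarrow> ennreal"
  assumes P_out: "\<And>n m. n \<notin> N \<or> m \<notin> N \<Longrightarrow> P n m = 0"
    and \<iota>_out: "\<And>n. n \<notin> N \<Longrightarrow> \<iota> n = 0"
    and \<sigma>_out: "\<And>n. n \<notin> N \<Longrightarrow> \<sigma> n = 0"
    and q_out: "\<And>n. n \<notin> N \<Longrightarrow> q n = 0"
    and stoch: "\<And>n. n \<in> N \<Longrightarrow> ssum (P n) + \<sigma> n = 1"
    and balance: "\<And>m. q m = \<iota> m + ssum (\<lambda>n. q n * P n m)"
    and qfin: "ssum q \<noteq> \<infinity>"
    and acyc: "acyclic {(n,m). P n m \<noteq> 0}"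
begin

definition Pk :: "nat \<Rightarrow> nat \<Rightarrow> nat \<Rightarrow> ennreal" where
  "Pk k n m = ssum (\<lambda>v. if length v = k \<and> last (n#v) = m then wP P (n#v) else 0)"

lemma Pk_0: "Pk 0 n m = (if n = m then 1 else 0)"
proof -
  have "Pk 0 n m = ssum (\<lambda>v::nat list. if v = [] then (if n = m then 1 else 0) else 0)"
    unfolding Pk_def by (rule ssum_cong) auto
  also have "\<dots> = (if n = m then 1 else 0)" using ssum_single[of "[]" "\<lambda>_. if n = m then 1 else 0"] by simp
  finally show ?thesis .
qed

lemma Pk_Suc: "Pk (Suc k) n m = ssum (\<lambda>l. P n l * Pk k l m)"
proof -
  have "Pk (Suc k) n m = ssum (\<lambda>p. (\<lambda>v. if length v = Suc k \<and> last (n#v) = m then wP P (n#v) else 0) (fst p # snd p))"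
    unfolding Pk_def by (subst ssum_list_split) simp
  also have "\<dots> = ssum (\<lambda>l. ssum (\<lambda>v. (\<lambda>v. if length v = Suc k \<and> last (n#v) = m then wP P (n#v) else 0) (l # v)))"
    by (rule ssum_pair')
  also have "\<dots> = ssum (\<lambda>l. P n l * Pk k l m)"
    unfolding Pk_def
    by (rule ssum_cong, subst ssum_cmult_left[symmetric], rule ssum_cong) auto
  finally show ?thesis .
qed

lemma Pk_1: "Pk (Suc 0) n m = P n m"
  by (simp add: Pk_Suc Pk_0 ssum_single_mult1)

lemma Pk_Suc_right: "Pk (Suc k) n m = ssum (\<lambda>l. Pk k n l * P l m)"
proof (induction k arbitrary: n)
  case 0
  then show ?case by (simp add: Pk_1 Pk_0 ssum_single_mult2')
next
  case (Suc k)
  have "Pk (Suc (Suc k)) n m = ssum (\<lambda>l. ssum (\<lambda>l'. P n l * (Pk k l l' * P l' m)))"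
    by (simp add: Pk_Suc[of "Suc k"] Suc.IH ssum_cmult_left)
  also have "\<dots> = ssum (\<lambda>l'. ssum (\<lambda>l. P n l * Pk k l l' * P l' m))"
    by (subst ssum_swap) (simp add: mult.assoc)
  also have "\<dots> = ssum (\<lambda>l'. Pk (Suc k) n l' * P l' m)"
    by (simp add: Pk_Suc[of k] ssum_cmult_right)
  finally show ?case .
qed

lemma Pk_add: "Pk (j + K) n l = ssum (\<lambda>m. Pk j n m * Pk K m l)"
proof (induction j arbitrary: n)
  case 0
  then show ?case by (simp add: Pk_0 ssum_single_mult2')
next
  case (Suc j)
  have "Pk (Suc j + K) n l = ssum (\<lambda>a. ssum (\<lambda>m. P n a * (Pk j a m * Pk K m l)))"
    by (simp add: Pk_Suc Suc.IH ssum_cmult_left)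
  also have "\<dots> = ssum (\<lambda>m. ssum (\<lambda>a. P n a * Pk j a m * Pk K m l))"
    by (subst ssum_swap) (simp add: mult.assoc)
  also have "\<dots> = ssum (\<lambda>m. Pk (Suc j) n m * Pk K m l)"
    by (simp add: Pk_Suc ssum_cmult_right)
  finally show ?case .
qed

definition Rel where "Rel = {(n,m). P n m \<noteq> 0}"

lemma Pk_reach: "Pk k n m \<noteq> 0 \<Longrightarrow> (n,m) \<in> Rel\<^sup>*"
proof (induction k arbitrary: n)
  case 0
  then show ?case by (simp add: Pk_0 split: if_splits)
next
  case (Suc k)
  then obtain l where "P n l * Pk k l m \<noteq> 0" by (auto simp: Pk_Suc ssum_eq_0_iff)
  then have "(n,l) \<in> Rel" "(l,m) \<in> Rel\<^sup>*" using Suc.IH by (auto simp: Rel_def)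
  then show ?case by auto
qed

lemma Pk_N_right: "Pk (Suc k) n m \<noteq> 0 \<Longrightarrow> m \<in> N"
  using P_out by (auto simp: Pk_Suc_right ssum_eq_0_iff)

lemma Pk_N_left: "Pk (Suc k) n m \<noteq> 0 \<Longrightarrow> n \<in> N"
  using P_out by (auto simp: Pk_Suc ssum_eq_0_iff)

lemma P_sum_le1: "ssum (P n) \<le> 1"
proof (cases "n \<in> N")
  case True
  then show ?thesis using stoch[OF True] by (metis add_increasing2 le_iff_add zero_le)
next
  case False
  then have "P n = (\<lambda>x. 0)" using P_out by auto
  then show ?thesis by simp
qed

lemma G_bound: "(\<Sum>k<K. Pk k n m0) \<le> 1"
proof (induction K arbitrary: n)
  case 0
  then show ?case by simp
next
  case (Suc K)
  have split: "(\<Sum>k<Suc K. Pk k n m0) = Pk 0 n m0 + ssum (\<lambda>l. P n l * (\<Sum>k<K. Pk k l m0))"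
  proof -
    have "(\<Sum>k<Suc K. Pk k n m0) = Pk 0 n m0 + (\<Sum>k<K. Pk (Suc k) n m0)"
      by (subst sum.lessThan_Suc_shift) simp
    also have "(\<Sum>k<K. Pk (Suc k) n m0) = ssum (\<lambda>l. P n l * (\<Sum>k<K. Pk k l m0))"
      by (simp add: Pk_Suc ssum_sum sum_distrib_left)
    finally show ?thesis .
  qed
  show ?case
  proof (cases "n = m0")
    case True
    have "ssum (\<lambda>l. P n l * (\<Sum>k<K. Pk k l m0)) = 0"
    proof (subst ssum_eq_0_iff, intro allI)
      fix l
      show "P n l * (\<Sum>k<K. Pk k l m0) = 0"
      proof (rule ccontr)
        assume "P n l * (\<Sum>k<K. Pk k l m0) \<noteq> 0"
        then obtain k where "P n l \<noteq> 0" "Pk k l m0 \<noteq> 0" by auto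
        then have "(m0,l) \<in> Rel" "(l,m0) \<in> Rel\<^sup>*" using True Pk_reach by (auto simp: Rel_def)
        then have "(m0,m0) \<in> Rel\<^sup>+" by auto
        then show False using acyc by (auto simp: acyclic_def Rel_def)
      qed
    qed
    then show ?thesis using split by (simp add: Pk_0 True)
  next
    case False
    have "ssum (\<lambda>l. P n l * (\<Sum>k<K. Pk k l m0)) \<le> ssum (\<lambda>l. P n l * 1)"
      by (rule ssum_mono, rule mult_left_mono) (use Suc.IH in auto)
    also have "\<dots> \<le> 1" using P_sum_le1[of n] by simp
    finally show ?thesis using split False by (simp add: Pk_0)
  qed
qed

definition H where "H j m = ssum (\<lambda>n. \<iota> n * Pk j n m)"
definition h where "h m = (\<Sum>j. H j m)"
definition R where "R k m = ssum (\<lambda>n. q n * Pk k n m)"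

lemma partial_le_suminf: "(\<Sum>j<K. f j) \<le> (\<Sum>j. f j :: ennreal)"
  unfolding suminf_eq_SUP by (rule SUP_upper) simp

lemma R_step: "R k m = H k m + R (Suc k) m"
proof -
  have "R k m = ssum (\<lambda>l. (\<iota> l + ssum (\<lambda>n. q n * P n l)) * Pk k l m)"
    unfolding R_def by (subst balance) simp
  also have "\<dots> = H k m + ssum (\<lambda>l. ssum (\<lambda>n. q n * P n l) * Pk k l m)"
    by (simp add: distrib_right ssum_add H_def)
  also have "ssum (\<lambda>l. ssum (\<lambda>n. q n * P n l) * Pk k l m) = ssum (\<lambda>l. ssum (\<lambda>n. q n * (P n l * Pk k l m)))"
    by (simp add: ssum_cmult_right[symmetric] mult.assoc)
  also have "\<dots> = R (Suc k) m"
    by (subst ssum_swap) (simp add: R_def Pk_Suc ssum_cmult_left)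
  finally show ?thesis .
qed

lemma q_split: "q m = (\<Sum>j<K. H j m) + R K m"
proof (induction K)
  case 0
  then show ?case by (simp add: R_def Pk_0 ssum_single_mult1)
next
  case (Suc K)
  then show ?case by (simp add: R_step[of K] add.assoc)
qed

lemma R_anti: "k \<le> K \<Longrightarrow> R K m \<le> R k m"
proof (induction K rule: dec_induct)
  case base then show ?case by simp
next
  case (step K)
  have "R (Suc K) m \<le> R K m" using R_step[of K m] by (metis add.commute le_iff_add)
  then show ?case using step.IH by order
qed

lemma R_sum: "(\<Sum>k<K. R k m) \<le> ssum q"
proof -
  have "(\<Sum>k<K. R k m) = ssum (\<lambda>n. q n * (\<Sum>k<K. Pk k n m))"
    by (simp add: R_def ssum_sum sum_distrib_left)
  also have "\<dots> \<le> ssum (\<lambda>n. q n * 1)"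
    by (rule ssum_mono, rule mult_left_mono) (use G_bound in auto)
  finally show ?thesis by simp
qed

lemma R_K_bound: "of_nat K * R K m \<le> ssum q"
proof -
  have "of_nat K * R K m = (\<Sum>k<K. R K m)" by simp
  also have "\<dots> \<le> (\<Sum>k<K. R k m)" by (rule sum_mono) (auto intro: R_anti)
  also have "\<dots> \<le> ssum q" by (rule R_sum)
  finally show ?thesis .
qed

lemma q_le_ssum: "q m \<le> ssum q" by (rule ssum_ge)

lemma h_le_q: "h m \<le> q m"
  unfolding h_def suminf_eq_SUP
proof (rule SUP_least)
  fix K show "(\<Sum>j<K. H j m) \<le> q m" by (subst q_split[of m K]) simp
qed

lemma h_eq_q: "h m = q m"
proof (rule antisym[OF h_le_q])
  show "q m \<le> h m"
  proof (rule ennreal_le_epsilon)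
    fix e :: real assume "0 < e"
    obtain c where c: "ssum q = ennreal c" "0 \<le> c" using qfin by (cases "ssum q") auto
    define K where "K = nat \<lceil>c / e\<rceil> + 1"
    have K: "c / e < real K" "0 < K" unfolding K_def by linarith+
    have "R 0 m \<le> ssum q" using q_split[of m 0] q_le_ssum[of m] by simp
    then have "R K m \<noteq> \<infinity>" using R_anti[of 0 K m] qfin by (auto simp: top_unique)
    then obtain r where r: "R K m = ennreal r" "0 \<le> r" by (cases "R K m") auto
    have "ennreal (real K * r) \<le> ennreal c" using R_K_bound[of K m] c r
      by (simp add: ennreal_mult ennreal_of_nat_eq_real_of_nat)
    then have "real K * r \<le> c" using c by (simp add: ennreal_le_iff)
    then have "r \<le> e" using K \<open>0 < e\<close> r
      by (smt (verit, ccfv_SIG) divide_less_eq mult_le_cancel_left_pos mult.commute of_nat_0_less_iff)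
    have "q m = (\<Sum>j<K. H j m) + R K m" by (rule q_split)
    also have "\<dots> \<le> h m + ennreal e"
      using partial_le_suminf[where K=K and f="\<lambda>j. H j m"] r \<open>r \<le> e\<close> unfolding h_def
      by (intro add_mono) (auto simp: ennreal_leI)
    finally show "q m \<le> h m + ennreal e" .
  qed
qed

definition S where "S K m = ssum (\<lambda>l. Pk K m l)"
definition Tt where "Tt K m = (\<Sum>k<K. ssum (\<lambda>l. Pk k m l * \<sigma> l))"
definition \<tau> where "\<tau> m = (\<Sum>k. ssum (\<lambda>l. Pk k m l * \<sigma> l))"

lemma S_0: "S 0 m = 1"
  unfolding S_def Pk_0 using ssum_single'[of m "\<lambda>_. 1::ennreal"] by simp

lemma Pk_factor:
  assumes "m \<in> N" shows "Pk K m l = Pk K m l * (\<sigma> l + ssum (P l))"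
proof (cases "l \<in> N")
  case True
  then show ?thesis using stoch[OF True] by (simp add: add.commute)
next
  case False
  have "Pk K m l = 0"
  proof (cases K)
    case 0 then show ?thesis using False assms by (auto simp: Pk_0)
  next
    case (Suc k) then show ?thesis using Pk_N_right[of k m l] False by auto
  qed
  then show ?thesis by simp
qed

lemma TS: assumes "m \<in> N" shows "Tt K m + S K m = 1"
proof (induction K)
  case 0
  then show ?case by (simp add: Tt_def S_0)
next
  case (Suc K)
  have "S K m = ssum (\<lambda>l. Pk K m l * (\<sigma> l + ssum (P l)))"
    unfolding S_def using Pk_factor[OF assms] by metis
  also have "\<dots> = ssum (\<lambda>l. Pk K m l * \<sigma> l) + ssum (\<lambda>l. ssum (\<lambda>l'. Pk K m l * P l l'))"
    by (simp add: distrib_left ssum_add ssum_cmult_left)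
  also have "ssum (\<lambda>l. ssum (\<lambda>l'. Pk K m l * P l l')) = S (Suc K) m"
    by (subst ssum_swap) (simp add: S_def Pk_Suc_right)
  finally have "S K m = ssum (\<lambda>l. Pk K m l * \<sigma> l) + S (Suc K) m" .
  then show ?case using Suc.IH by (simp add: Tt_def add.assoc)
qed

lemma Tt_le_\<tau>: "Tt K m \<le> \<tau> m"
  unfolding Tt_def \<tau>_def by (rule partial_le_suminf)

lemma \<tau>_le1: assumes "m \<in> N" shows "\<tau> m \<le> 1"
  unfolding \<tau>_def suminf_eq_SUP
proof (rule SUP_least)
  fix K show "(\<Sum>k<K. ssum (\<lambda>l. Pk k m l * \<sigma> l)) \<le> 1"
    using TS[OF assms, of K] unfolding Tt_def by (metis le_iff_add)
qed

definition a where "a j = ssum (\<lambda>m. H j m)"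

lemma chap: "ssum (\<lambda>m. H j m * S K m) = ssum (\<lambda>n. \<iota> n * S (j + K) n)"
proof -
  have "H j m * S K m = ssum (\<lambda>n. ssum (\<lambda>l. \<iota> n * (Pk j n m * Pk K m l)))" for m
    unfolding H_def S_def by (simp add: ssum_cmult_right[symmetric] ssum_cmult_left[symmetric] mult.assoc) (rule ssum_swap)
  then have "ssum (\<lambda>m. H j m * S K m) = ssum (\<lambda>m. ssum (\<lambda>n. ssum (\<lambda>l. \<iota> n * (Pk j n m * Pk K m l))))"
    by simp
  also have "\<dots> = ssum (\<lambda>n. ssum (\<lambda>m. ssum (\<lambda>l. \<iota> n * (Pk j n m * Pk K m l))))"
    by (rule ssum_swap)
  also have "\<dots> = ssum (\<lambda>n. ssum (\<lambda>l. ssum (\<lambda>m. \<iota> n * (Pk j n m * Pk K m l))))"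
    by (subst ssum_swap) simp
  also have "\<dots> = ssum (\<lambda>n. \<iota> n * S (j + K) n)"
    by (simp add: S_def Pk_add ssum_cmult_left)
  finally show ?thesis .
qed

lemma a_eq: "a j = ssum (\<lambda>n. \<iota> n * S j n)"
  using chap[of j 0] by (simp add: a_def S_0)

lemma tail_eq: "ssum (\<lambda>m. h m * S K m) = (\<Sum>j. a (j + K))"
proof -
  have "ssum (\<lambda>m. h m * S K m) = ssum (\<lambda>m. \<Sum>j. H j m * S K m)"
    by (simp add: h_def)
  also have "\<dots> = (\<Sum>j. ssum (\<lambda>m. H j m * S K m))" by (rule ssum_suminf)
  also have "\<dots> = (\<Sum>j. a (j + K))" by (simp add: chap a_eq)
  finally show ?thesis .
qed

lemma suma: "(\<Sum>j. a j) = ssum q"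
proof -
  have "(\<Sum>j. a j) = ssum (\<lambda>m. \<Sum>j. H j m)" unfolding a_def by (rule ssum_suminf[symmetric])
  also have "\<dots> = ssum q" by (simp add: h_def[symmetric] h_eq_q)
  finally show ?thesis .
qed

lemma ennreal_tail_small:
  fixes f :: "nat \<Rightarrow> ennreal"
  assumes "suminf f \<noteq> \<infinity>" "0 < e"
  shows "\<exists>K. (\<Sum>j. f (j + K)) \<le> ennreal e"
proof -
  define g where "g j = enn2real (f j)" for j
  have fin: "f j \<noteq> \<infinity>" for j
  proof -
    have "f j \<le> suminf f" using ssum_ge[of f j] by (simp add: ssum_nat)
    then show ?thesis using assms(1) by (auto simp: top_unique)
  qed
  have fg: "f j = ennreal (g j)" for j using fin[of j] by (cases "f j") (auto simp: g_def)
  have g0: "0 \<le> g j" for j by (simp add: g_def)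
  have sg: "summable g" using assms(1) g0 by (intro summable_suminf_not_top) (auto simp: fg[symmetric])
  obtain K where K: "\<forall>n\<ge>K. norm (\<Sum>i. g (i + n)) < e" using suminf_exist_split[OF assms(2) sg] by blast
  have "(\<Sum>j. f (j + K)) = ennreal (\<Sum>j. g (j + K))"
    by (simp add: fg suminf_ennreal2 g0 sg summable_iff_shift)
  also have "\<dots> \<le> ennreal e" using K by (intro ennreal_leI) auto
  finally show ?thesis by blast
qed

lemma h_N: "m \<notin> N \<Longrightarrow> h m = 0"
proof -
  assume m: "m \<notin> N"
  have "H j m = 0" for j
  proof (cases j)
    case 0 then show ?thesis using \<iota>_out[OF m] by (simp add: H_def Pk_0 ssum_single_mult1)
  next
    case (Suc k)
    then have "Pk j n m = 0" for n using Pk_N_right[of k n m] m by auto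
    then show ?thesis by (simp add: H_def)
  qed
  then show "h m = 0" by (simp add: h_def)
qed

lemma h\<tau>: "h m * \<tau> m = h m"
proof (cases "m \<in> N")
  case False then show ?thesis by (simp add: h_N)
next
  case mN: True
  show ?thesis
  proof (rule antisym)
    show "h m * \<tau> m \<le> h m" using \<tau>_le1[OF mN] by (metis mult.right_neutral mult_left_mono zero_le)
    show "h m \<le> h m * \<tau> m"
    proof (rule ennreal_le_epsilon)
      fix e :: real assume "0 < e"
      have "suminf a \<noteq> \<infinity>" using suma qfin by simp
      then obtain K where K: "(\<Sum>j. a (j + K)) \<le> ennreal e" using ennreal_tail_small \<open>0 < e\<close> by blast
      have "h m * S K m \<le> ssum (\<lambda>m. h m * S K m)" by (rule ssum_ge[where f="\<lambda>m. h m * S K m"])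
      also have "\<dots> \<le> ennreal e" using K tail_eq by simp
      finally have 1: "h m * S K m \<le> ennreal e" .
      have "h m = h m * (Tt K m + S K m)" using TS[OF mN] by simp
      also have "\<dots> = h m * Tt K m + h m * S K m" by (simp add: distrib_left)
      also have "\<dots> \<le> h m * \<tau> m + ennreal e"
        by (intro add_mono mult_left_mono Tt_le_\<tau> 1) auto
      finally show "h m \<le> h m * \<tau> m + ennreal e" .
    qed
  qed
qed

definition W :: "nat list \<Rightarrow> ennreal" where
  "W c = (if c = [] then 0 else \<iota> (hd c) * wP P c * \<sigma> (last c))"

lemma hsum: "ssum (\<lambda>u. \<iota> (hd (u@[m])) * wP P (u@[m])) = h m"
proof -
  define F where "F x = \<iota> (hd x) * wP P x" for x
  have step2: "ssum (\<lambda>u. if length u = k then F (u@[m]) else 0) =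
      ssum (\<lambda>x. if length x = Suc k \<and> last x = m then F x else 0)" for k
  proof -
    have "ssum (\<lambda>u. (\<lambda>x. if length x = Suc k \<and> last x = m then F x else 0) (u @ [m])) =
        ssum (\<lambda>x. if length x = Suc k \<and> last x = m then F x else 0)"
    proof (rule ssum_reindex)
      show "inj (\<lambda>u. u @ [m])" by (auto simp: inj_def)
      fix y assume "y \<notin> range (\<lambda>u. u @ [m])"
      then show "(if length y = Suc k \<and> last y = m then F y else 0) = 0"
        by (metis (no_types, lifting) append_butlast_last_id length_0_conv nat.distinct(1) rangeI)
    qed
    then show ?thesis by (simp cong: if_cong)
  qed
  have step3: "H k m = ssum (\<lambda>x. if length x = Suc k \<and> last x = m then F x else 0)" for k
  proof -
    have "ssum (\<lambda>x. if length x = Suc k \<and> last x = m then F x else 0) =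
        ssum (\<lambda>p. (\<lambda>x. if length x = Suc k \<and> last x = m then F x else 0) (fst p # snd p))"
      by (subst ssum_list_split) simp
    also have "\<dots> = ssum (\<lambda>n. ssum (\<lambda>v. (\<lambda>x. if length x = Suc k \<and> last x = m then F x else 0) (n # v)))"
      by (rule ssum_pair')
    also have "\<dots> = H k m"
      unfolding H_def Pk_def F_def
      by (rule ssum_cong, subst ssum_cmult_left[symmetric], rule ssum_cong) auto
    finally show ?thesis ..
  qed
  have "ssum (\<lambda>u. F (u@[m])) = (\<Sum>k. ssum (\<lambda>u. if length u = k then F (u@[m]) else 0))"
    by (rule ssum_by_length)
  also have "\<dots> = (\<Sum>k. H k m)" by (simp add: step2 step3)
  finally show ?thesis by (simp add: F_def h_def)
qed

lemma tausum: "ssum (\<lambda>v. wP P (m#v) * \<sigma> (last (m#v))) = \<tau> m"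
proof -
  have "ssum (\<lambda>l. Pk k m l * \<sigma> l) = ssum (\<lambda>v. if length v = k then wP P (m#v) * \<sigma> (last (m#v)) else 0)" for k
  proof -
    have "ssum (\<lambda>l. Pk k m l * \<sigma> l) = ssum (\<lambda>l. ssum (\<lambda>v. if length v = k \<and> last (m#v) = l then wP P (m#v) * \<sigma> l else 0))"
      unfolding Pk_def by (rule ssum_cong, subst ssum_cmult_right[symmetric], rule ssum_cong) simp
    also have "\<dots> = ssum (\<lambda>v. ssum (\<lambda>l. if length v = k \<and> last (m#v) = l then wP P (m#v) * \<sigma> l else 0))"
      by (rule ssum_swap)
    also have "\<dots> = ssum (\<lambda>v. if length v = k then wP P (m#v) * \<sigma> (last (m#v)) else 0)"
    proof (rule ssum_cong)
      fix v
      show "ssum (\<lambda>l. if length v = k \<and> last (m#v) = l then wP P (m#v) * \<sigma> l else 0) =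
          (if length v = k then wP P (m#v) * \<sigma> (last (m#v)) else 0)"
      proof -
        have gen: "ssum (\<lambda>l. if length v = k \<and> z = l then wP P (m#v) * \<sigma> l else 0) =
          (if length v = k then wP P (m#v) * \<sigma> z else 0)" for z
          by (cases "length v = k") (simp_all add: ssum_single')
        show ?thesis by (rule gen)
      qed
    qed
    finally show ?thesis .
  qed
  then show ?thesis unfolding \<tau>_def by (simp add: ssum_by_length[symmetric])
qed

lemma B2: "ssum (\<lambda>c. if c \<noteq> [] \<and> last c = m then W c else 0) = q m * \<sigma> m"
proof -
  have "ssum (\<lambda>u. (\<lambda>c. if c \<noteq> [] \<and> last c = m then W c else 0) (u @ [m])) =
      ssum (\<lambda>c. if c \<noteq> [] \<and> last c = m then W c else 0)"
  proof (rule ssum_reindex)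
    show "inj (\<lambda>u. u @ [m])" by (auto simp: inj_def)
    fix y assume "y \<notin> range (\<lambda>u. u @ [m])"
    then show "(if y \<noteq> [] \<and> last y = m then W y else 0) = 0"
      by (metis append_butlast_last_id rangeI)
  qed
  moreover have "ssum (\<lambda>u. (\<lambda>c. if c \<noteq> [] \<and> last c = m then W c else 0) (u @ [m])) = h m * \<sigma> m"
    by (simp add: W_def hsum ssum_cmult_right)
  ultimately show ?thesis by (simp add: h_eq_q)
qed

lemma \<iota>\<tau>: "\<iota> m * \<tau> m = \<iota> m"
proof (cases "\<iota> m = 0")
  case True then show ?thesis by simp
next
  case False
  have "\<iota> m \<le> h m"
  proof -
    have "H 0 m = \<iota> m" by (simp add: H_def Pk_0 ssum_single_mult1)
    moreover have "H 0 m \<le> h m" unfolding h_def using ssum_ge[of "\<lambda>j. H j m" 0] by (simp add: ssum_nat)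
    ultimately show ?thesis by simp
  qed
  then have "h m \<noteq> 0" using False by auto
  moreover have "h m \<noteq> \<infinity>" using h_eq_q q_le_ssum[of m] qfin by (auto simp: top_unique)
  ultimately obtain r where r: "h m = ennreal r" "0 < r"
    by (cases "h m") (auto simp: ennreal_eq_0_iff)
  have "\<tau> m * ennreal r = 1 * ennreal r" using h\<tau>[of m] r by (simp add: mult.commute)
  then have "\<tau> m = 1" using r mult_right_ennreal_cancel[of "\<tau> m" r 1] by simp
  then show ?thesis by simp
qed

lemma B1: "ssum (\<lambda>c. if c \<noteq> [] \<and> hd c = m then W c else 0) = \<iota> m"
proof -
  have "ssum (\<lambda>v. (\<lambda>c. if c \<noteq> [] \<and> hd c = m then W c else 0) (m # v)) =
      ssum (\<lambda>c. if c \<noteq> [] \<and> hd c = m then W c else 0)"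
  proof (rule ssum_reindex)
    show "inj (\<lambda>v. m # v)" by (auto simp: inj_def)
    fix y assume "y \<notin> range (\<lambda>v. m # v)"
    then show "(if y \<noteq> [] \<and> hd y = m then W y else 0) = 0"
      by (metis list.collapse rangeI)
  qed
  moreover have "ssum (\<lambda>v. (\<lambda>c. if c \<noteq> [] \<and> hd c = m then W c else 0) (m # v)) = \<iota> m * \<tau> m"
    by (simp add: W_def tausum[symmetric] ssum_cmult_left mult.assoc)
  ultimately show ?thesis by (simp add: \<iota>\<tau>)
qed

lemma cnt: "(of_nat (count_list c m) :: ennreal) = ssum (\<lambda>u. ssum (\<lambda>v. if c = u @ m # v then 1 else 0))"
proof (induction c)
  case Nil
  then show ?case by simp
next
  case (Cons x c)
  have "ssum (\<lambda>u. ssum (\<lambda>v. if x # c = u @ m # v then (1::ennreal) else 0)) =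
      ssum (\<lambda>v. if x # c = m # v then 1 else 0) +
      ssum (\<lambda>p. ssum (\<lambda>v. if x # c = fst p # snd p @ m # v then 1 else 0))"
    using ssum_list_split[of "\<lambda>u. ssum (\<lambda>v. if x # c = u @ m # v then (1::ennreal) else 0)"] by simp
  also have "ssum (\<lambda>v. if x # c = m # v then (1::ennreal) else 0) = (if x = m then 1 else 0)"
  proof (cases "x = m")
    case True
    then show ?thesis using ssum_single'[of c "\<lambda>_. (1::ennreal)"] by simp
  next
    case False then show ?thesis by simp
  qed
  also have "ssum (\<lambda>p. ssum (\<lambda>v. if x # c = fst p # snd p @ m # v then (1::ennreal) else 0)) =
      ssum (\<lambda>a. ssum (\<lambda>u. ssum (\<lambda>v. if x # c = a # u @ m # v then 1 else 0)))"
    by (rule ssum_pair')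
  also have "\<dots> = ssum (\<lambda>a. if a = x then ssum (\<lambda>u. ssum (\<lambda>v. if c = u @ m # v then (1::ennreal) else 0)) else 0)"
  proof (rule ssum_cong)
    fix a
    show "ssum (\<lambda>u. ssum (\<lambda>v. if x # c = a # u @ m # v then (1::ennreal) else 0)) =
      (if a = x then ssum (\<lambda>u. ssum (\<lambda>v. if c = u @ m # v then (1::ennreal) else 0)) else 0)"
    proof (cases "a = x")
      case True then show ?thesis by simp
    next
      case False then show ?thesis by simp
    qed
  qed
  also have "\<dots> = of_nat (count_list c m)" by (simp only: ssum_single Cons.IH)
  finally show ?case by simp
qed

lemma A: "ssum (\<lambda>c. W c * of_nat (count_list c m)) = q m"
proof -
  have "ssum (\<lambda>c. W c * of_nat (count_list c m)) =
      ssum (\<lambda>c. ssum (\<lambda>u. ssum (\<lambda>v. if c = u @ m # v then W c else 0)))"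
  proof (rule ssum_cong)
    fix c
    show "W c * of_nat (count_list c m) = ssum (\<lambda>u. ssum (\<lambda>v. if c = u @ m # v then W c else 0))"
      by (simp only: cnt ssum_cmult_left[symmetric]) (rule ssum_cong, rule ssum_cong, simp)
  qed
  also have "\<dots> = ssum (\<lambda>u. ssum (\<lambda>c. ssum (\<lambda>v. if c = u @ m # v then W c else 0)))"
    by (rule ssum_swap)
  also have "\<dots> = ssum (\<lambda>u. ssum (\<lambda>v. ssum (\<lambda>c. if c = u @ m # v then W c else 0)))"
    by (rule ssum_cong) (rule ssum_swap)
  also have "\<dots> = ssum (\<lambda>u. ssum (\<lambda>v. W (u @ m # v)))"
    by (simp add: ssum_single)
  also have "\<dots> = ssum (\<lambda>u. ssum (\<lambda>v. (\<iota> (hd (u@[m])) * wP P (u@[m])) * (wP P (m#v) * \<sigma> (last (m#v)))))"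
  proof -
    have "W (u @ m # v) = (\<iota> (hd (u@[m])) * wP P (u@[m])) * (wP P (m#v) * \<sigma> (last (m#v)))" for u v
    proof -
      have "hd (u @ m # v) = hd (u @ [m])" by (cases u) auto
      moreover have "last (u @ m # v) = last (m # v)" by simp
      moreover have ne: "u @ m # v \<noteq> []" by simp
      ultimately show ?thesis unfolding W_def if_not_P[OF ne] wP_append[of P u m v]
        by (simp only: mult.assoc)
    qed
    then show ?thesis by simp
  qed
  also have "\<dots> = h m * \<tau> m"
    by (simp only: ssum_cmult_left ssum_cmult_right hsum tausum)
  also have "\<dots> = q m" by (metis h\<tau> h_eq_q)
  finally show ?thesis .
qed

end


definition el :: "'a list \<Rightarrow> ('a \<times> 'a) list" where "el xs = zip xs (tl xs)"

lemma set_el: "set (el xs) = {(xs ! i, xs ! Suc i) | i. Suc i < length xs}"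
  unfolding el_def by (auto simp: set_zip nth_tl)

lemma pf_el: "path_flow xs e = (if e \<in> set (el xs) then 1 else 0)"
  unfolding path_flow_def set_el by auto

lemma dpath_el: "dpath V E xs \<longleftrightarrow> xs \<noteq> [] \<and> set xs \<subseteq> V \<and> set (el xs) \<subseteq> E"
  unfolding dpath_def set_el by auto

lemma el_short: "length xs < 2 \<Longrightarrow> el xs = []"
  unfolding el_def by (cases xs) auto

lemma el_Cons: "el (a # L) = (if L = [] then [] else (a, hd L) # el L)"
  unfolding el_def by (cases L) auto

lemma el_append: "xs \<noteq> [] \<Longrightarrow> ys \<noteq> [] \<Longrightarrow> last xs = hd ys \<Longrightarrow> el (butlast xs @ ys) = el xs @ el ys"
proof (induction xs)
  case Nil then show ?case by simp
next
  case (Cons a xs)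
  show ?case
  proof (cases xs)
    case Nil
    then show ?thesis using Cons.prems by (simp add: el_Cons)
  next
    case (Cons b zs)
    then have ne: "xs \<noteq> []" by simp
    have hd: "hd (butlast xs @ ys) = hd xs"
    proof (cases "butlast xs = []")
      case True
      then have "xs = [last xs]" using ne by (metis append_butlast_last_id append_Nil)
      then have "hd xs = last xs" by (metis list.sel(1))
      then show ?thesis using True Cons.prems ne by (simp split: if_splits)
    next
      case False
      have "hd (butlast xs) = hd xs" using False ne by (metis append_butlast_last_id hd_append2)
      then show ?thesis using False by simp
    qed
    have "el (butlast (a # xs) @ ys) = el (a # (butlast xs @ ys))" using ne by simp
    also have "\<dots> = (a, hd xs) # el (butlast xs @ ys)" using Cons.prems hd by (simp add: el_Cons)
    also have "el (butlast xs @ ys) = el xs @ el ys" using Cons.IH Cons.prems ne by simp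
    finally show ?thesis using ne by (simp add: el_Cons)
  qed
qed

lemma walk_trancl:
  assumes "set (el xs) \<subseteq> R" "i < j" "j < length xs"
  shows "(xs ! i, xs ! j) \<in> R\<^sup>+"
  using assms(2,3)
proof (induction j)
  case 0 then show ?case by simp
next
  case (Suc j)
  have e: "(xs ! j, xs ! Suc j) \<in> R" using assms(1) Suc.prems unfolding set_el by auto
  show ?case
  proof (cases "i = j")
    case True then show ?thesis using e by auto
  next
    case False
    then have "(xs ! i, xs ! j) \<in> R\<^sup>+" using Suc by auto
    then show ?thesis using e by auto
  qed
qed

lemma walk_distinct:
  assumes "set (el xs) \<subseteq> R" "acyclic R"
  shows "distinct xs"
proof (rule ccontr)
  assume "\<not> distinct xs"
  then obtain i j where ij: "i < j" "j < length xs" "xs ! i = xs ! j"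
    by (metis distinct_conv_nth linorder_neqE_nat)
  then have "(xs ! i, xs ! i) \<in> R\<^sup>+" using walk_trancl[OF assms(1) ij(1,2)] by simp
  then show False using assms(2) by (auto simp: acyclic_def)
qed

lemma walk_hd_last:
  assumes "set (el xs) \<subseteq> R" "2 \<le> length xs"
  shows "(hd xs, last xs) \<in> R\<^sup>+"
proof -
  have "(xs ! 0, xs ! (length xs - 1)) \<in> R\<^sup>+" using walk_trancl[OF assms(1)] assms(2) by auto
  moreover have "xs \<noteq> []" using assms(2) by auto
  moreover have "xs ! 0 = hd xs" "xs ! (length xs - 1) = last xs" using \<open>xs \<noteq> []\<close>
    by (auto simp: hd_conv_nth last_conv_nth)
  ultimately show ?thesis by simp
qed

lemma distinct_el: "distinct xs \<Longrightarrow> distinct (el xs)"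
  unfolding el_def by (rule distinct_zipI1)

lemma count_distinct: "distinct ys \<Longrightarrow> count_list ys e = (if e \<in> set ys then 1 else 0)"
  by (induction ys) auto

lemma pf_count: "distinct xs \<Longrightarrow> path_flow xs e = real (count_list (el xs) e)"
  by (simp add: pf_el count_distinct distinct_el)

lemma count_concat: "count_list (concat xss) e = sum_list (map (\<lambda>xs. count_list xs e) xss)"
  by (induction xss) auto

lemma sum_list_ssum: "(sum_list (map f c) :: ennreal) = ssum (\<lambda>m. of_nat (count_list c m) * f m)"
proof (induction c)
  case Nil then show ?case by simp
next
  case (Cons x c)
  have "ssum (\<lambda>m. of_nat (count_list (x # c) m) * f m) =
     ssum (\<lambda>m. (if m = x then f m else 0) + of_nat (count_list c m) * f m)"
    by (rule ssum_cong) (auto simp: distrib_right)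
  also have "\<dots> = f x + sum_list (map f c)" by (simp add: ssum_add ssum_single Cons.IH)
  finally show ?case by simp
qed

lemma succ_sum:
  assumes "distinct xs"
  shows "ssum (\<lambda>y. ennreal (path_flow xs (x,y))) = (if x \<in> set xs \<and> x \<noteq> last xs then 1 else 0)"
proof (cases "x \<in> set xs \<and> x \<noteq> last xs")
  case True
  then obtain i where i: "i < length xs" "xs ! i = x" by (auto simp: in_set_conv_nth)
  have "xs \<noteq> []" using i by auto
  then have "Suc i < length xs" using True i by (metis Suc_lessI last_conv_nth diff_Suc_1)
  have "ennreal (path_flow xs (x,y)) = (if y = xs ! Suc i then 1 else 0)" for y
  proof -
    have "(\<exists>j. Suc j < length xs \<and> (x,y) = (xs ! j, xs ! Suc j)) \<longleftrightarrow> y = xs ! Suc i"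
    proof
      assume "\<exists>j. Suc j < length xs \<and> (x,y) = (xs ! j, xs ! Suc j)"
      then obtain j where "Suc j < length xs" "x = xs ! j" "y = xs ! Suc j" by auto
      then have "j = i" using i assms by (metis Suc_lessD nth_eq_iff_index_eq)
      then show "y = xs ! Suc i" using \<open>y = xs ! Suc j\<close> by simp
    next
      assume "y = xs ! Suc i" then show "\<exists>j. Suc j < length xs \<and> (x,y) = (xs ! j, xs ! Suc j)"
        using \<open>Suc i < length xs\<close> i by auto
    qed
    then show ?thesis unfolding path_flow_def by auto
  qed
  then have "ssum (\<lambda>y. ennreal (path_flow xs (x,y))) = ssum (\<lambda>y. if y = xs ! Suc i then 1 else 0)"
    by simp
  also have "\<dots> = 1" using ssum_single[of "xs ! Suc i" "\<lambda>_. 1::ennreal"] by simp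
  finally show ?thesis using True by simp
next
  case False
  have "path_flow xs (x,y) = 0" for y
  proof -
    have "\<not> (Suc j < length xs \<and> x = xs ! j)" for j
    proof
      assume j: "Suc j < length xs \<and> x = xs ! j"
      then have "x \<in> set xs" by auto
      then have "x = last xs" using False by auto
      then have "xs ! j = xs ! (length xs - 1)" using j by (metis last_conv_nth list.size(3) not_less_zero)
      moreover have "j < length xs" "length xs - 1 < length xs" using j by auto
      ultimately have "j = length xs - 1" using assms nth_eq_iff_index_eq[of xs j "length xs - 1"] by blast
      then show False using j by auto
    qed
    then show ?thesis unfolding path_flow_def by auto
  qed
  then show ?thesis using False by simp
qed

lemma pred_sum:
  assumes "distinct xs"
  shows "ssum (\<lambda>y. ennreal (path_flow xs (y,x))) = (if x \<in> set xs \<and> x \<noteq> hd xs then 1 else 0)"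
proof (cases "x \<in> set xs \<and> x \<noteq> hd xs")
  case True
  then obtain i where i: "i < length xs" "xs ! i = x" by (auto simp: in_set_conv_nth)
  have "i \<noteq> 0" using True i by (metis hd_conv_nth length_greater_0_conv less_zeroE list.size(3))
  then obtain k where k: "i = Suc k" by (cases i) auto
  have "ennreal (path_flow xs (y,x)) = (if y = xs ! k then 1 else 0)" for y
  proof -
    have "(\<exists>j. Suc j < length xs \<and> (y,x) = (xs ! j, xs ! Suc j)) \<longleftrightarrow> y = xs ! k"
    proof
      assume "\<exists>j. Suc j < length xs \<and> (y,x) = (xs ! j, xs ! Suc j)"
      then obtain j where "Suc j < length xs" "y = xs ! j" "x = xs ! Suc j" by auto
      then have "Suc j = i" using i assms by (metis nth_eq_iff_index_eq)
      then show "y = xs ! k" using \<open>y = xs ! j\<close> k by simp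
    next
      assume "y = xs ! k" then show "\<exists>j. Suc j < length xs \<and> (y,x) = (xs ! j, xs ! Suc j)"
        using i k by auto
    qed
    then show ?thesis unfolding path_flow_def by auto
  qed
  then have "ssum (\<lambda>y. ennreal (path_flow xs (y,x))) = ssum (\<lambda>y. if y = xs ! k then 1 else 0)"
    by simp
  also have "\<dots> = 1" using ssum_single[of "xs ! k" "\<lambda>_. 1::ennreal"] by simp
  finally show ?thesis using True by simp
next
  case False
  have "path_flow xs (y,x) = 0" for y
  proof -
    have "\<not> (Suc j < length xs \<and> x = xs ! Suc j)" for j
    proof
      assume j: "Suc j < length xs \<and> x = xs ! Suc j"
      then have "x \<in> set xs" by (metis nth_mem)
      then have "x = hd xs" using False by auto
      then have "xs ! Suc j = xs ! 0" using j by (metis hd_conv_nth list.size(3) not_less_zero)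
      moreover have "Suc j < length xs" "0 < length xs" using j by auto
      ultimately have "Suc j = 0" using assms nth_eq_iff_index_eq[of xs "Suc j" 0] by blast
      then show False by simp
    qed
    then show ?thesis unfolding path_flow_def by auto
  qed
  then show ?thesis using False by simp
qed



lemma ssum_ind_nn: "ssum (\<lambda>x. if x \<in> A then f x else 0) = (\<integral>\<^sup>+x. f x \<partial>count_space A)"
proof (cases "A = UNIV")
  case True then show ?thesis by (simp add: ssum_def)
next
  case False
  then have "NO_MATCH (UNIV::'a set) A" by simp
  then show ?thesis unfolding ssum_def
    by (subst nn_integral_count_space_indicator) (auto intro!: nn_integral_cong split: split_indicator)
qed

lemma BR1:
  fixes f :: "'a \<Rightarrow> real"
  assumes nn: "\<And>x. x \<in> A \<Longrightarrow> 0 \<le> f x"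
    and eq: "ssum (\<lambda>x. if x \<in> A then ennreal (f x) else 0) = ennreal s" and s: "0 \<le> s"
  shows "(f has_sum s) A"
proof -
  have nni: "(\<integral>\<^sup>+x. ennreal (f x) \<partial>count_space A) = ennreal s" using eq by (simp add: ssum_ind_nn)
  have int: "integrable (count_space A) f"
    by (rule integrableI_nn_integral_finite[OF _ _ nni]) (auto simp: AE_count_space nn)
  then have abs: "Infinite_Set_Sum.abs_summable_on f A" by (simp add: abs_summable_on_def)
  have "infsetsum f A = enn2real (\<integral>\<^sup>+x. ennreal (f x) \<partial>count_space A)"
    by (rule infsetsum_conv_nn_integral) (use nni nn in auto)
  then have "infsetsum f A = s" using nni s by simp
  then have inf: "infsum f A = s" using infsetsum_infsum[OF abs] by simp
  have "Infinite_Sum.abs_summable_on f A" using abs abs_summable_equivalent by blast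
  then have "f summable_on A" by (rule abs_summable_summable)
  then show ?thesis using inf by (simp add: has_sum_iff)
qed

lemma BR2:
  fixes f :: "'a \<Rightarrow> real"
  assumes nn: "\<And>x. x \<in> A \<Longrightarrow> 0 \<le> f x" and hs: "(f has_sum s) A"
  shows "ssum (\<lambda>x. if x \<in> A then ennreal (f x) else 0) = ennreal s"
proof -
  have "f summable_on A" using hs by (auto simp: summable_on_def)
  then have "Infinite_Sum.abs_summable_on f A" using summable_on_iff_abs_summable_on_real by blast
  then have abs: "Infinite_Set_Sum.abs_summable_on f A" using abs_summable_equivalent by blast
  have "(\<integral>\<^sup>+x. ennreal (f x) \<partial>count_space A) = ennreal (infsetsum f A)"
    by (rule nn_integral_conv_infsetsum[OF abs]) (use nn in auto)
  also have "infsetsum f A = s" using infsetsum_infsum[OF abs] hs by (simp add: has_sum_iff)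
  finally show ?thesis by (simp add: ssum_ind_nn)
qed

lemma ssum_real_nat:
  fixes f :: "nat \<Rightarrow> real"
  assumes "\<And>n. 0 \<le> f n" "summable f"
  shows "ssum (\<lambda>n. ennreal (f n)) = ennreal (\<Sum>n. f n)"
  using assms by (simp add: ssum_nat suminf_ennreal2)



fun catp :: "(nat \<Rightarrow> 'v list) \<Rightarrow> nat list \<Rightarrow> 'v list" where
  "catp g [] = []" | "catp g [m] = g m" | "catp g (m # m' # r) = butlast (g m) @ catp g (m' # r)"

locale fs =
  fixes V :: "'v set" and E :: "('v \<times> 'v) set" and \<mu>1 \<mu>2 :: "'v \<Rightarrow> real" and Q :: "'v \<times> 'v \<Rightarrow> real"
    and g :: "nat \<Rightarrow> 'v list" and qq :: "nat \<Rightarrow> real"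
  assumes EV: "E \<subseteq> V \<times> V"
    and pf1: "prob_fun V \<mu>1" and pf2: "prob_fun V \<mu>2"
    and qq_nn: "\<And>n. 0 \<le> qq n" and g_sa: "\<And>n. sa_dpath V E (g n)"
    and sq: "summable qq"
    and Qs: "\<And>e. e \<in> E \<Longrightarrow> (\<lambda>n. qq n * path_flow (g n) e) sums Q e"
    and acQ: "acyclic_flow E Q"
    and dv: "\<And>x. x \<in> V \<Longrightarrow> divergence E Q x = \<mu>1 x - \<mu>2 x"
begin

definition "Nset = {n. 0 < qq n \<and> 2 \<le> length (g n)}"
definition "s n = hd (g n)"
definition "t n = last (g n)"
definition "Sv x = (\<Sum>n. if n \<in> Nset \<and> s n = x then qq n else 0)"
definition "Tv x = (\<Sum>n. if n \<in> Nset \<and> t n = x then qq n else 0)"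
definition "Mv x = max (Sv x) (Tv x)"
definition "ap x = max (\<mu>1 x - \<mu>2 x) 0"
definition "am x = max (\<mu>2 x - \<mu>1 x) 0"
definition "R0 = {e \<in> E. 0 < Q e}"

lemma g_dist: "distinct (g n)" using g_sa[of n] by (simp add: sa_dpath_def)
lemma g_ne: "g n \<noteq> []" using g_sa[of n] by (simp add: sa_dpath_def dpath_def)
lemma g_V: "set (g n) \<subseteq> V" using g_sa[of n] by (simp add: sa_dpath_def dpath_def)
lemma g_E: "set (el (g n)) \<subseteq> E" using g_sa[of n] by (simp add: sa_dpath_def dpath_el)

lemma summ_le: "(\<And>n. 0 \<le> f n \<and> f n \<le> qq n) \<Longrightarrow> summable f"
  by (rule summable_comparison_test[OF _ sq]) auto

lemma summ_ind: "summable (\<lambda>n. if P n then qq n else 0)"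
  by (rule summ_le) (auto simp: qq_nn)

lemma ssum_ind: "ssum (\<lambda>n. ennreal (if P n then qq n else 0)) = ennreal (\<Sum>n. if P n then qq n else 0)"
  by (rule ssum_real_nat) (auto simp: qq_nn summ_ind)

lemma pf_nn: "0 \<le> path_flow xs e" by (simp add: path_flow_def)
lemma pf_le1: "path_flow xs e \<le> 1" by (simp add: path_flow_def)

lemma Q_ennreal: "e \<in> E \<Longrightarrow> ennreal (Q e) = ssum (\<lambda>n. ennreal (qq n * path_flow (g n) e))"
proof -
  assume e: "e \<in> E"
  have sm: "summable (\<lambda>n. qq n * path_flow (g n) e)" using Qs[OF e] by (simp add: sums_iff)
  have "Q e = (\<Sum>n. qq n * path_flow (g n) e)" using Qs[OF e] by (simp add: sums_iff)
  then show ?thesis by (simp add: ssum_real_nat sm qq_nn pf_nn)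
qed

lemma Q_nn: "e \<in> E \<Longrightarrow> 0 \<le> Q e"
  by (rule sums_le[OF _ sums_zero Qs]) (auto simp: qq_nn pf_nn)

lemma Q_ge: assumes "n \<in> Nset" "e \<in> set (el (g n))" shows "qq n \<le> Q e"
proof -
  have e: "e \<in> E" using g_E assms(2) by auto
  have sm: "summable (\<lambda>n. qq n * path_flow (g n) e)" using Qs[OF e] by (simp add: sums_iff)
  have "qq n = (\<Sum>k\<in>{n}. qq k * path_flow (g k) e)" using assms(2) by (simp add: pf_el)
  also have "\<dots> \<le> (\<Sum>k. qq k * path_flow (g k) e)"
    by (rule sum_le_suminf[OF sm]) (auto simp: qq_nn pf_nn)
  also have "\<dots> = Q e" using Qs[OF e] by (simp add: sums_iff)
  finally show ?thesis .
qed

lemma el_R0: assumes "n \<in> Nset" shows "set (el (g n)) \<subseteq> R0"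
proof
  fix e assume e: "e \<in> set (el (g n))"
  then have "e \<in> E" using g_E by auto
  moreover have "qq n \<le> Q e" by (rule Q_ge[OF assms e])
  moreover have "0 < qq n" using assms by (simp add: Nset_def)
  ultimately show "e \<in> R0" by (simp add: R0_def)
qed

lemma acR0: "acyclic R0" using acQ by (simp add: acyclic_flow_def R0_def)

lemma s_neq_t: "n \<in> Nset \<Longrightarrow> s n \<noteq> t n"
proof -
  assume n: "n \<in> Nset"
  then have l: "2 \<le> length (g n)" by (simp add: Nset_def)
  have "g n ! 0 \<noteq> g n ! (length (g n) - 1)"
  proof
    assume eq: "g n ! 0 = g n ! (length (g n) - 1)"
    have "0 < length (g n)" "length (g n) - 1 < length (g n)" using l by auto
    then have "0 = length (g n) - 1" using eq g_dist[of n] nth_eq_iff_index_eq by blast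
    then show False using l by simp
  qed
  then show ?thesis using g_ne[of n] by (simp add: s_def t_def hd_conv_nth last_conv_nth)
qed

lemma Sv_ge: "n \<in> Nset \<Longrightarrow> qq n \<le> Sv (s n)"
proof -
  assume n: "n \<in> Nset"
  have "qq n = (\<Sum>k\<in>{n}. if k \<in> Nset \<and> s k = s n then qq k else 0)" using n by simp
  also have "\<dots> \<le> Sv (s n)" unfolding Sv_def by (rule sum_le_suminf[OF summ_ind]) (auto simp: qq_nn)
  finally show ?thesis .
qed

lemma Tv_ge: "n \<in> Nset \<Longrightarrow> qq n \<le> Tv (t n)"
proof -
  assume n: "n \<in> Nset"
  have "qq n = (\<Sum>k\<in>{n}. if k \<in> Nset \<and> t k = t n then qq k else 0)" using n by simp
  also have "\<dots> \<le> Tv (t n)" unfolding Tv_def by (rule sum_le_suminf[OF summ_ind]) (auto simp: qq_nn)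
  finally show ?thesis .
qed

lemma Sv_nn: "0 \<le> Sv x" unfolding Sv_def by (rule suminf_nonneg[OF summ_ind]) (auto simp: qq_nn)
lemma Tv_nn: "0 \<le> Tv x" unfolding Tv_def by (rule suminf_nonneg[OF summ_ind]) (auto simp: qq_nn)

lemma pf_notE: "e \<notin> E \<Longrightarrow> path_flow (g n) e = 0"
  using g_E[of n] by (auto simp: pf_el)

lemma out_sum: "ssum (\<lambda>y. if y \<in> {y. (x,y) \<in> E} then ennreal (Q (x,y)) else 0) =
   ennreal (\<Sum>n. qq n * (if x \<in> set (g n) \<and> x \<noteq> last (g n) then 1 else 0))"
proof -
  have "ssum (\<lambda>y. if y \<in> {y. (x,y) \<in> E} then ennreal (Q (x,y)) else 0) =
      ssum (\<lambda>y. ssum (\<lambda>n. ennreal (qq n) * ennreal (path_flow (g n) (x,y))))"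
  proof (rule ssum_cong)
    fix y show "(if y \<in> {y. (x,y) \<in> E} then ennreal (Q (x,y)) else 0) =
      ssum (\<lambda>n. ennreal (qq n) * ennreal (path_flow (g n) (x,y)))"
      by (cases "(x,y) \<in> E") (auto simp: Q_ennreal ennreal_mult qq_nn pf_nn pf_notE)
  qed
  also have "\<dots> = ssum (\<lambda>n. ennreal (qq n) * ssum (\<lambda>y. ennreal (path_flow (g n) (x,y))))"
    by (subst ssum_swap) (simp add: ssum_cmult_left)
  also have "\<dots> = ssum (\<lambda>n. ennreal (qq n * (if x \<in> set (g n) \<and> x \<noteq> last (g n) then 1 else 0)))"
    by (rule ssum_cong) (simp add: succ_sum g_dist)
  also have "\<dots> = ennreal (\<Sum>n. qq n * (if x \<in> set (g n) \<and> x \<noteq> last (g n) then 1 else 0))"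
    by (rule ssum_real_nat) (auto simp: qq_nn intro!: summ_le)
  finally show ?thesis .
qed

lemma in_sum: "ssum (\<lambda>y. if y \<in> {y. (y,x) \<in> E} then ennreal (Q (y,x)) else 0) =
   ennreal (\<Sum>n. qq n * (if x \<in> set (g n) \<and> x \<noteq> hd (g n) then 1 else 0))"
proof -
  have "ssum (\<lambda>y. if y \<in> {y. (y,x) \<in> E} then ennreal (Q (y,x)) else 0) =
      ssum (\<lambda>y. ssum (\<lambda>n. ennreal (qq n) * ennreal (path_flow (g n) (y,x))))"
  proof (rule ssum_cong)
    fix y show "(if y \<in> {y. (y,x) \<in> E} then ennreal (Q (y,x)) else 0) =
      ssum (\<lambda>n. ennreal (qq n) * ennreal (path_flow (g n) (y,x)))"
      by (cases "(y,x) \<in> E") (auto simp: Q_ennreal ennreal_mult qq_nn pf_nn pf_notE)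
  qed
  also have "\<dots> = ssum (\<lambda>n. ennreal (qq n) * ssum (\<lambda>y. ennreal (path_flow (g n) (y,x))))"
    by (subst ssum_swap) (simp add: ssum_cmult_left)
  also have "\<dots> = ssum (\<lambda>n. ennreal (qq n * (if x \<in> set (g n) \<and> x \<noteq> hd (g n) then 1 else 0)))"
    by (rule ssum_cong) (simp add: pred_sum g_dist)
  also have "\<dots> = ennreal (\<Sum>n. qq n * (if x \<in> set (g n) \<and> x \<noteq> hd (g n) then 1 else 0))"
    by (rule ssum_real_nat) (auto simp: qq_nn intro!: summ_le)
  finally show ?thesis .
qed

lemma summ_mult_ind: "summable (\<lambda>n. qq n * (if P n then 1 else 0))"
  by (rule summ_le) (auto simp: qq_nn)

lemma out_real: "infsum (\<lambda>y. Q (x,y)) {y. (x,y) \<in> E} = (\<Sum>n. qq n * (if x \<in> set (g n) \<and> x \<noteq> last (g n) then 1 else 0))"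
proof -
  have "((\<lambda>y. Q (x,y)) has_sum (\<Sum>n. qq n * (if x \<in> set (g n) \<and> x \<noteq> last (g n) then 1 else 0))) {y. (x,y) \<in> E}"
    by (rule BR1[OF _ out_sum]) (auto simp: Q_nn qq_nn intro!: suminf_nonneg summ_mult_ind)
  then show ?thesis by (rule infsumI)
qed

lemma in_real: "infsum (\<lambda>y. Q (y,x)) {y. (y,x) \<in> E} = (\<Sum>n. qq n * (if x \<in> set (g n) \<and> x \<noteq> hd (g n) then 1 else 0))"
proof -
  have "((\<lambda>y. Q (y,x)) has_sum (\<Sum>n. qq n * (if x \<in> set (g n) \<and> x \<noteq> hd (g n) then 1 else 0))) {y. (y,x) \<in> E}"
    by (rule BR1[OF _ in_sum]) (auto simp: Q_nn qq_nn intro!: suminf_nonneg summ_mult_ind)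
  then show ?thesis by (rule infsumI)
qed

lemma per_n: "qq n * (if x \<in> set (g n) \<and> x \<noteq> last (g n) then 1 else 0) - qq n * (if x \<in> set (g n) \<and> x \<noteq> hd (g n) then 1 else 0)
  = (if n \<in> Nset \<and> s n = x then qq n else 0) - (if n \<in> Nset \<and> t n = x then qq n else 0)"
proof (cases "qq n = 0")
  case True then show ?thesis by simp
next
  case False
  then have qp: "0 < qq n" using qq_nn[of n] by simp
  show ?thesis
  proof (cases "2 \<le> length (g n)")
    case True
    then have n: "n \<in> Nset" using qp by (simp add: Nset_def)
    have st: "s n \<noteq> t n" by (rule s_neq_t[OF n])
    have "hd (g n) \<in> set (g n)" "last (g n) \<in> set (g n)" using g_ne[of n] by auto
    then show ?thesis using n st by (auto simp: s_def t_def)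
  next
    case False
    then obtain v where "g n = [v]" using g_ne[of n] by (cases "g n") (auto, metis list.exhaust_sel list.size(4) Suc_1 Suc_le_mono le_add2 length_Cons)
    then show ?thesis using False by (auto simp: Nset_def)
  qed
qed

lemma Div: assumes "x \<in> V" shows "\<mu>1 x - \<mu>2 x = Sv x - Tv x"
proof -
  have "\<mu>1 x - \<mu>2 x = (\<Sum>n. qq n * (if x \<in> set (g n) \<and> x \<noteq> last (g n) then 1 else 0)) -
      (\<Sum>n. qq n * (if x \<in> set (g n) \<and> x \<noteq> hd (g n) then 1 else 0))"
    using dv[OF assms] by (simp add: divergence_def out_real in_real)
  also have "\<dots> = (\<Sum>n. qq n * (if x \<in> set (g n) \<and> x \<noteq> last (g n) then 1 else 0) - qq n * (if x \<in> set (g n) \<and> x \<noteq> hd (g n) then 1 else 0))"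
    by (subst suminf_diff) (auto intro: summ_mult_ind)
  also have "\<dots> = (\<Sum>n. (if n \<in> Nset \<and> s n = x then qq n else 0) - (if n \<in> Nset \<and> t n = x then qq n else 0))"
    by (simp only: per_n)
  also have "\<dots> = Sv x - Tv x" unfolding Sv_def Tv_def
    by (subst suminf_diff) (auto intro: summ_ind)
  finally show ?thesis .
qed

definition "Pp n m = ennreal (if n \<in> Nset \<and> m \<in> Nset \<and> t n = s m then qq m / Mv (s m) else 0)"
definition "\<iota>p m = ennreal (if m \<in> Nset then qq m * ap (s m) / Mv (s m) else 0)"
definition "\<sigma>p n = ennreal (if n \<in> Nset then am (t n) / Mv (t n) else 0)"
definition "qp n = ennreal (if n \<in> Nset then qq n else 0)"

lemma s_V: "s n \<in> V" using g_V[of n] g_ne[of n] by (auto simp: s_def)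
lemma t_V: "t n \<in> V" using g_V[of n] g_ne[of n] by (auto simp: t_def)

lemma Mv_pos_s: "n \<in> Nset \<Longrightarrow> 0 < Mv (s n)"
  using Sv_ge[of n] by (auto simp: Mv_def Nset_def)
lemma Mv_pos_t: "n \<in> Nset \<Longrightarrow> 0 < Mv (t n)"
  using Tv_ge[of n] by (auto simp: Mv_def Nset_def)

lemma S_am: "x \<in> V \<Longrightarrow> Sv x + am x = Mv x"
  using Div[of x] by (auto simp: am_def Mv_def)
lemma T_ap: "x \<in> V \<Longrightarrow> Tv x + ap x = Mv x"
  using Div[of x] by (auto simp: ap_def Mv_def)

lemma ssum_S: "ssum (\<lambda>m. ennreal (if m \<in> Nset \<and> s m = x then qq m else 0)) = ennreal (Sv x)"
  unfolding Sv_def by (rule ssum_ind)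
lemma ssum_T: "ssum (\<lambda>m. ennreal (if m \<in> Nset \<and> t m = x then qq m else 0)) = ennreal (Tv x)"
  unfolding Tv_def by (rule ssum_ind)

lemma Mv_nn: "0 \<le> Mv x" using Sv_nn by (simp add: Mv_def le_max_iff_disj)
lemma ap_nn: "0 \<le> ap x" by (simp add: ap_def)
lemma am_nn: "0 \<le> am x" by (simp add: am_def)

lemma stoch': assumes n: "n \<in> Nset" shows "ssum (Pp n) + \<sigma>p n = 1"
proof -
  let ?x = "t n"
  have M: "0 < Mv ?x" using Mv_pos_t[OF n] .
  have "Pp n m = ennreal (1 / Mv ?x) * ennreal (if m \<in> Nset \<and> s m = ?x then qq m else 0)" for m
    using n M by (auto simp: Pp_def ennreal_mult[symmetric] qq_nn)
  then have "ssum (Pp n) = ssum (\<lambda>m. ennreal (1 / Mv ?x) * ennreal (if m \<in> Nset \<and> s m = ?x then qq m else 0))"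
    by (intro ssum_cong) simp
  then have "ssum (Pp n) = ennreal (1 / Mv ?x) * ennreal (Sv ?x)"
    by (simp add: ssum_cmult_left ssum_S)
  also have "\<dots> = ennreal (Sv ?x / Mv ?x)" using M by (simp add: ennreal_mult[symmetric] Sv_nn)
  finally have "ssum (Pp n) + \<sigma>p n = ennreal (Sv ?x / Mv ?x) + ennreal (am ?x / Mv ?x)"
    using n by (simp add: \<sigma>p_def)
  also have "\<dots> = ennreal ((Sv ?x + am ?x) / Mv ?x)"
    using M by (simp add: ennreal_plus[symmetric] Sv_nn am_nn add_divide_distrib del: ennreal_plus)
  also have "\<dots> = 1" using S_am[OF t_V] M by simp
  finally show ?thesis .
qed

lemma balance': "qp m = \<iota>p m + ssum (\<lambda>n. qp n * Pp n m)"
proof (cases "m \<in> Nset")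
  case False
  then show ?thesis by (simp add: qp_def \<iota>p_def Pp_def)
next
  case m: True
  let ?x = "s m"
  have M: "0 < Mv ?x" using Mv_pos_s[OF m] .
  have "qp n * Pp n m = ennreal (qq m / Mv ?x) * ennreal (if n \<in> Nset \<and> t n = ?x then qq n else 0)" for n
    using m M by (auto simp: Pp_def qp_def ennreal_mult[symmetric] qq_nn)
  then have "ssum (\<lambda>n. qp n * Pp n m) = ennreal (qq m / Mv ?x) * ennreal (Tv ?x)"
    by (simp add: ssum_cmult_left ssum_T)
  also have "\<dots> = ennreal (qq m * Tv ?x / Mv ?x)" using M by (simp add: ennreal_mult[symmetric] Tv_nn qq_nn)
  finally have "\<iota>p m + ssum (\<lambda>n. qp n * Pp n m) = ennreal (qq m * ap ?x / Mv ?x) + ennreal (qq m * Tv ?x / Mv ?x)"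
    using m by (simp add: \<iota>p_def)
  also have "\<dots> = ennreal (qq m * (Tv ?x + ap ?x) / Mv ?x)"
    using M by (simp add: ennreal_plus[symmetric] Tv_nn ap_nn qq_nn add_divide_distrib distrib_left del: ennreal_plus)
  also have "\<dots> = qp m" using T_ap[OF s_V] M m by (simp add: qp_def)
  finally show ?thesis by simp
qed

lemma qfin': "ssum qp \<noteq> \<infinity>"
proof -
  have "qp = (\<lambda>n. ennreal (if n \<in> Nset then qq n else 0))" by (rule ext) (simp add: qp_def)
  then show ?thesis using ssum_ind[of "\<lambda>n. n \<in> Nset"] by simp
qed

lemma Pp_nz: "Pp n m \<noteq> 0 \<Longrightarrow> n \<in> Nset \<and> m \<in> Nset \<and> t n = s m"
  by (auto simp: Pp_def split: if_splits)

lemma st_R0: "n \<in> Nset \<Longrightarrow> (s n, t n) \<in> R0\<^sup>+"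
  using walk_hd_last[OF el_R0] by (auto simp: s_def t_def Nset_def)

lemma acyc': "acyclic {(n,m). Pp n m \<noteq> 0}"
proof -
  have key: "(n,m) \<in> {(n,m). Pp n m \<noteq> 0}\<^sup>+ \<Longrightarrow> (s n, s m) \<in> R0\<^sup>+" for n m
  proof (induction rule: trancl_induct)
    case (base m)
    then show ?case using Pp_nz st_R0 by force
  next
    case (step m l)
    then have "m \<in> Nset" "t m = s l" using Pp_nz by auto
    then show ?case using step.IH st_R0 by (metis (no_types, lifting) trancl_trans)
  qed
  show ?thesis unfolding acyclic_def using key acR0 by (auto simp: acyclic_def)
qed

sublocale C: chainsys Nset Pp \<iota>p \<sigma>p qp
proof
  show "\<And>n m. n \<notin> Nset \<or> m \<notin> Nset \<Longrightarrow> Pp n m = 0" by (auto simp: Pp_def)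
  show "\<And>n. n \<notin> Nset \<Longrightarrow> \<iota>p n = 0" by (simp add: \<iota>p_def)
  show "\<And>n. n \<notin> Nset \<Longrightarrow> \<sigma>p n = 0" by (simp add: \<sigma>p_def)
  show "\<And>n. n \<notin> Nset \<Longrightarrow> qp n = 0" by (simp add: qp_def)
  show "\<And>n. n \<in> Nset \<Longrightarrow> ssum (Pp n) + \<sigma>p n = 1" by (rule stoch')
  show "\<And>m. qp m = \<iota>p m + ssum (\<lambda>n. qp n * Pp n m)" by (rule balance')
  show "ssum qp \<noteq> \<infinity>" by (rule qfin')
  show "acyclic {(n,m). Pp n m \<noteq> 0}" by (rule acyc')
qed

definition "st c = s (hd c)"
definition "en c = t (last c)"

lemma cat_props:
  "c \<noteq> [] \<Longrightarrow> hd c \<in> Nset \<Longrightarrow> wP Pp c \<noteq> 0 \<Longrightarrow>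
   catp g c \<noteq> [] \<and> hd (catp g c) = s (hd c) \<and> last (catp g c) = t (last c) \<and> set (catp g c) \<subseteq> V \<and>
   el (catp g c) = concat (map (\<lambda>m. el (g m)) c) \<and> 2 \<le> length (catp g c) \<and> set c \<subseteq> Nset"
proof (induction c rule: induct_list012)
  case 1 then show ?case by simp
next
  case (2 m)
  have "2 \<le> length (g m)" using "2.prems" by (simp add: Nset_def)
  then show ?case using g_V[of m] g_ne[of m] "2.prems" by (simp add: s_def t_def)
next
  case (3 m m' r)
  have "Pp m m' \<noteq> 0" "wP Pp (m' # r) \<noteq> 0" using "3.prems" by auto
  then have mm: "m \<in> Nset" "m' \<in> Nset" "t m = s m'" using Pp_nz by blast+
  have IH: "catp g (m' # r) \<noteq> [] \<and> hd (catp g (m' # r)) = s m' \<and> last (catp g (m' # r)) = t (last (m' # r)) \<and>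
    set (catp g (m' # r)) \<subseteq> V \<and> el (catp g (m' # r)) = concat (map (\<lambda>m. el (g m)) (m' # r)) \<and>
    2 \<le> length (catp g (m' # r)) \<and> set (m' # r) \<subseteq> Nset"
    using "3.IH"(2) mm(2) \<open>wP Pp (m' # r) \<noteq> 0\<close> by simp
  define L where "L = catp g (m' # r)"
  have L1: "L \<noteq> []" and L2: "hd L = s m'" and L3: "last L = t (last (m' # r))" and L4: "set L \<subseteq> V"
    and L5: "el L = concat (map (\<lambda>m. el (g m)) (m' # r))" and L6: "2 \<le> length L" and L7: "set (m' # r) \<subseteq> Nset"
    using IH unfolding L_def by blast+
  have cat: "catp g (m # m' # r) = butlast (g m) @ L" by (simp add: L_def)
  have len: "2 \<le> length (g m)" using mm by (simp add: Nset_def)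
  then have bl: "butlast (g m) \<noteq> []" by (cases "g m") auto
  have lh: "last (g m) = hd L" using L2 mm by (simp add: t_def)
  have e: "el (catp g (m # m' # r)) = el (g m) @ el L"
    unfolding cat by (rule el_append[OF g_ne[of m] L1 lh])
  have h: "hd (catp g (m # m' # r)) = s m"
  proof -
    have "hd (butlast (g m)) = hd (g m)" using bl by (cases "g m") auto
    then show ?thesis unfolding cat using bl by (simp add: s_def)
  qed
  have l: "last (catp g (m # m' # r)) = t (last (m # m' # r))" unfolding cat using L1 L3 by simp
  have sv: "set (catp g (m # m' # r)) \<subseteq> V"
  proof -
    have "set (butlast (g m)) \<subseteq> V"
    proof
      fix v assume "v \<in> set (butlast (g m))"
      then have "v \<in> set (g m)" by (rule in_set_butlastD)
      then show "v \<in> V" using g_V[of m] by blast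
    qed
    then show ?thesis unfolding cat using L4 by simp
  qed
  have len2: "2 \<le> length (catp g (m # m' # r))" unfolding cat using L6 by simp
  have ne: "catp g (m # m' # r) \<noteq> []" unfolding cat using L1 by simp
  have sN: "set (m # m' # r) \<subseteq> Nset" using L7 mm by simp
  have e2: "el (catp g (m # m' # r)) = concat (map (\<lambda>m. el (g m)) (m # m' # r))" using e L5 by simp
  show ?case unfolding list.sel(1) using ne h l sv e2 len2 sN by blast
qed

lemma W_nz:
  assumes "C.W c \<noteq> 0"
  shows "c \<noteq> [] \<and> hd c \<in> Nset \<and> wP Pp c \<noteq> 0"
proof -
  have c: "c \<noteq> []" using assms by (auto simp: C.W_def)
  then have "\<iota>p (hd c) \<noteq> 0" "wP Pp c \<noteq> 0" using assms by (auto simp: C.W_def)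
  then show ?thesis using c by (auto simp: \<iota>p_def split: if_splits)
qed

lemma cat_good:
  assumes "C.W c \<noteq> 0"
  shows "dpath V E (catp g c)" "distinct (catp g c)" "hd (catp g c) = st c" "last (catp g c) = en c"
    "st c \<noteq> en c" "st c \<in> V" "en c \<in> V"
    "el (catp g c) = concat (map (\<lambda>m. el (g m)) c)" "set c \<subseteq> Nset"
proof -
  have w: "c \<noteq> []" "hd c \<in> Nset" "wP Pp c \<noteq> 0" using W_nz[OF assms] by auto
  note P = cat_props[OF w]
  have P1: "catp g c \<noteq> []" using P by blast
  have P2: "hd (catp g c) = s (hd c)" using P by blast
  have P3: "last (catp g c) = t (last c)" using P by blast
  have P4: "set (catp g c) \<subseteq> V" using P by blast
  have P5: "el (catp g c) = concat (map (\<lambda>m. el (g m)) c)" using P by blast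
  have P6: "2 \<le> length (catp g c)" using P by blast
  have P7: "set c \<subseteq> Nset" using P by blast
  show "set c \<subseteq> Nset" by (rule P7)
  show "el (catp g c) = concat (map (\<lambda>m. el (g m)) c)" by (rule P5)
  have sub: "set (el (catp g c)) \<subseteq> R0"
  proof
    fix e assume "e \<in> set (el (catp g c))"
    then obtain m where m: "m \<in> set c" "e \<in> set (el (g m))" using P5 by auto
    then have "m \<in> Nset" using P7 by blast
    then show "e \<in> R0" using el_R0 m(2) by blast
  qed
  show dc: "distinct (catp g c)" by (rule walk_distinct[OF sub acR0])
  have "R0 \<subseteq> E" by (auto simp: R0_def)
  then show "dpath V E (catp g c)" unfolding dpath_el using P1 P4 sub by blast
  show h: "hd (catp g c) = st c" using P2 by (simp add: st_def)
  show l: "last (catp g c) = en c" using P3 by (simp add: en_def)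
  show "st c \<in> V" "en c \<in> V" by (simp_all add: st_def en_def s_V t_V)
  show "st c \<noteq> en c"
  proof
    assume eq: "st c = en c"
    let ?L = "catp g c"
    have hl: "hd ?L = last ?L" using eq h l by simp
    have "?L ! 0 = ?L ! (length ?L - 1)" using hl P1 by (simp add: hd_conv_nth last_conv_nth)
    moreover have "0 < length ?L" "length ?L - 1 < length ?L" using P6 by auto
    ultimately have "0 = length ?L - 1" using dc nth_eq_iff_index_eq by blast
    then show False using P6 by simp
  qed
qed

lemma pf_cat:
  assumes "C.W c \<noteq> 0"
  shows "ennreal (path_flow (catp g c) e) = ssum (\<lambda>m. of_nat (count_list c m) * ennreal (path_flow (g m) e))"
proof -
  have "path_flow (catp g c) e = real (count_list (el (catp g c)) e)"
    by (rule pf_count[OF cat_good(2)[OF assms]])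
  also have "\<dots> = real (sum_list (map (\<lambda>m. count_list (el (g m)) e) c))"
    by (simp add: cat_good(8)[OF assms] count_concat o_def)
  finally have "ennreal (path_flow (catp g c) e) = of_nat (sum_list (map (\<lambda>m. count_list (el (g m)) e) c))"
    by (simp add: ennreal_of_nat_eq_real_of_nat)
  also have "\<dots> = sum_list (map (\<lambda>m. of_nat (count_list (el (g m)) e)) c)"
    by (simp add: sum_list_of_nat[symmetric] o_def)
  also have "\<dots> = ssum (\<lambda>m. of_nat (count_list c m) * of_nat (count_list (el (g m)) e))"
    by (rule sum_list_ssum)
  also have "\<dots> = ssum (\<lambda>m. of_nat (count_list c m) * ennreal (path_flow (g m) e))"
    by (simp add: pf_count g_dist ennreal_of_nat_eq_real_of_nat)
  finally show ?thesis .
qed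

lemma pf_outside: "n \<notin> Nset \<Longrightarrow> qq n * path_flow (g n) e = 0"
proof -
  assume n: "n \<notin> Nset"
  show ?thesis
  proof (cases "qq n = 0")
    case False
    then have "length (g n) < 2" using n qq_nn[of n] by (auto simp: Nset_def)
    then show ?thesis by (simp add: pf_el el_short)
  qed simp
qed

lemma edge_formula:
  assumes e: "e \<in> E"
  shows "ennreal (Q e) = ssum (\<lambda>c. C.W c * ennreal (path_flow (catp g c) e))"
proof -
  have "ennreal (Q e) = ssum (\<lambda>n. qp n * ennreal (path_flow (g n) e))"
    unfolding Q_ennreal[OF e]
  proof (rule ssum_cong)
    fix n show "ennreal (qq n * path_flow (g n) e) = qp n * ennreal (path_flow (g n) e)"
      using pf_outside[of n e] by (cases "n \<in> Nset") (auto simp: qp_def ennreal_mult qq_nn pf_nn)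
  qed
  also have "\<dots> = ssum (\<lambda>n. ssum (\<lambda>c. C.W c * (of_nat (count_list c n) * ennreal (path_flow (g n) e))))"
    by (simp add: C.A[symmetric] ssum_cmult_right[symmetric] mult.assoc)
  also have "\<dots> = ssum (\<lambda>c. C.W c * ssum (\<lambda>n. of_nat (count_list c n) * ennreal (path_flow (g n) e)))"
    by (subst ssum_swap) (simp add: ssum_cmult_left)
  also have "\<dots> = ssum (\<lambda>c. C.W c * ennreal (path_flow (catp g c) e))"
  proof (rule ssum_cong)
    fix c show "C.W c * ssum (\<lambda>n. of_nat (count_list c n) * ennreal (path_flow (g n) e)) =
        C.W c * ennreal (path_flow (catp g c) e)"
      by (cases "C.W c = 0") (simp_all add: pf_cat)
  qed
  finally show ?thesis .
qed

lemma W_Nil: "C.W [] = 0" by (simp add: C.W_def)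

lemma W_fin: "C.W c \<noteq> \<infinity>"
proof (cases "c = []")
  case True then show ?thesis by (simp add: W_Nil)
next
  case False
  have "C.W c \<le> ssum (\<lambda>c'. if c' \<noteq> [] \<and> hd c' = hd c then C.W c' else 0)"
    using ssum_ge[of "\<lambda>c'. if c' \<noteq> [] \<and> hd c' = hd c then C.W c' else 0" c] False by simp
  also have "\<dots> = \<iota>p (hd c)" by (rule C.B1)
  finally show ?thesis by (auto simp: \<iota>p_def top_unique)
qed

lemma group:
  fixes sel :: "nat list \<Rightarrow> nat" and f :: "nat \<Rightarrow> 'v"
  shows "ssum (\<lambda>c. if f (sel c) = x then C.W c else 0) =
    ssum (\<lambda>m. if f m = x then ssum (\<lambda>c. if c \<noteq> [] \<and> sel c = m then C.W c else 0) else 0)"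
proof -
  have "ssum (\<lambda>c. if f (sel c) = x then C.W c else 0) =
      ssum (\<lambda>c. ssum (\<lambda>m. if f m = x then (if c \<noteq> [] \<and> sel c = m then C.W c else 0) else 0))"
  proof (rule ssum_cong)
    fix c
    show "(if f (sel c) = x then C.W c else 0) =
      ssum (\<lambda>m. if f m = x then (if c \<noteq> [] \<and> sel c = m then C.W c else 0) else 0)"
    proof (cases "c = []")
      case True then show ?thesis by (simp add: W_Nil cong: if_cong)
    next
      case False
      have "ssum (\<lambda>m. if f m = x then (if c \<noteq> [] \<and> sel c = m then C.W c else 0) else 0) =
          ssum (\<lambda>m. if sel c = m then (if f m = x then C.W c else 0) else 0)"
        using False by (intro ssum_cong) auto
      also have "\<dots> = (if f (sel c) = x then C.W c else 0)" by (rule ssum_single')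
      finally show ?thesis by simp
    qed
  qed
  also have "\<dots> = ssum (\<lambda>m. ssum (\<lambda>c. if f m = x then (if c \<noteq> [] \<and> sel c = m then C.W c else 0) else 0))"
    by (rule ssum_swap)
  also have "\<dots> = ssum (\<lambda>m. if f m = x then ssum (\<lambda>c. if c \<noteq> [] \<and> sel c = m then C.W c else 0) else 0)"
    by (intro ssum_cong) auto
  finally show ?thesis .
qed

lemma SA: assumes x: "x \<in> V" shows "ssum (\<lambda>c. if st c = x then C.W c else 0) = ennreal (ap x)"
proof -
  have "ssum (\<lambda>c. if st c = x then C.W c else 0) =
      ssum (\<lambda>m. if s m = x then ssum (\<lambda>c. if c \<noteq> [] \<and> hd c = m then C.W c else 0) else 0)"
    using group[of s hd x] by (simp add: st_def)
  also have "\<dots> = ssum (\<lambda>m. if s m = x then \<iota>p m else 0)"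
    by (intro ssum_cong) (simp add: C.B1)
  also have "\<dots> = ssum (\<lambda>m. ennreal (ap x / Mv x) * ennreal (if m \<in> Nset \<and> s m = x then qq m else 0))"
    by (intro ssum_cong) (auto simp: \<iota>p_def ennreal_mult[symmetric] ap_nn Mv_nn qq_nn)
  also have "\<dots> = ennreal (ap x / Mv x * Sv x)"
    by (simp add: ssum_cmult_left ssum_S ennreal_mult[symmetric] ap_nn Mv_nn Sv_nn)
  also have "ap x / Mv x * Sv x = ap x"
  proof (cases "ap x = 0")
    case False
    then have "Tv x < Sv x" using Div[OF x] by (simp add: ap_def)
    then have "Mv x = Sv x" "0 < Sv x" using Tv_nn[of x] by (auto simp: Mv_def)
    then show ?thesis by simp
  qed simp
  finally show ?thesis .
qed

lemma EA: assumes y: "y \<in> V" shows "ssum (\<lambda>c. if en c = y then C.W c else 0) = ennreal (am y)"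
proof -
  have "ssum (\<lambda>c. if en c = y then C.W c else 0) =
      ssum (\<lambda>m. if t m = y then ssum (\<lambda>c. if c \<noteq> [] \<and> last c = m then C.W c else 0) else 0)"
    using group[of t last y] by (simp add: en_def)
  also have "\<dots> = ssum (\<lambda>m. if t m = y then qp m * \<sigma>p m else 0)"
    by (intro ssum_cong) (simp add: C.B2)
  also have "\<dots> = ssum (\<lambda>m. ennreal (am y / Mv y) * ennreal (if m \<in> Nset \<and> t m = y then qq m else 0))"
    by (intro ssum_cong) (auto simp: qp_def \<sigma>p_def ennreal_mult[symmetric] am_nn Mv_nn qq_nn)
  also have "\<dots> = ennreal (am y / Mv y * Tv y)"
    by (simp add: ssum_cmult_left ssum_T ennreal_mult[symmetric] am_nn Mv_nn Tv_nn)
  also have "am y / Mv y * Tv y = am y"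
  proof (cases "am y = 0")
    case False
    then have "Sv y < Tv y" using Div[OF y] by (simp add: am_def)
    then have "Mv y = Tv y" "0 < Tv y" using Sv_nn[of y] by (auto simp: Mv_def)
    then show ?thesis by simp
  qed simp
  finally show ?thesis .
qed

definition "\<rho>off x y = ssum (\<lambda>c. if st c = x \<and> en c = y then C.W c else 0)"
definition "\<rho> p = (if fst p = snd p then min (\<mu>1 (fst p)) (\<mu>2 (fst p)) else enn2real (\<rho>off (fst p) (snd p)))"
definition "Ix p = to_nat ` {c. C.W c \<noteq> 0 \<and> st c = fst p \<and> en c = snd p}"
definition "\<gamma>x (p :: 'v \<times> 'v) i = catp g (from_nat i)"
definition "wx (p :: 'v \<times> 'v) i = enn2real (C.W (from_nat i))"
definition "Dset = {(x,y). x \<in> V \<and> y \<in> V \<and> x \<noteq> y}"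

lemma mu1_nn: "x \<in> V \<Longrightarrow> 0 \<le> \<mu>1 x" using pf1 by (simp add: prob_fun_def)
lemma mu2_nn: "x \<in> V \<Longrightarrow> 0 \<le> \<mu>2 x" using pf2 by (simp add: prob_fun_def)

lemma W_ennreal: "ennreal (enn2real (C.W c)) = C.W c"
  using W_fin[of c] by (simp add: ennreal_enn2real_if top.not_eq_extremum)

lemma rowsum_off: assumes x: "x \<in> V"
  shows "ssum (\<lambda>y. if y \<in> V \<and> y \<noteq> x then \<rho>off x y else 0) = ennreal (ap x)"
proof -
  have "ssum (\<lambda>y. if y \<in> V \<and> y \<noteq> x then \<rho>off x y else 0) =
     ssum (\<lambda>y. ssum (\<lambda>c. if y \<in> V \<and> y \<noteq> x \<and> st c = x \<and> en c = y then C.W c else 0))"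
    unfolding \<rho>off_def by (intro ssum_cong) auto
  also have "\<dots> = ssum (\<lambda>c. ssum (\<lambda>y. if y \<in> V \<and> y \<noteq> x \<and> st c = x \<and> en c = y then C.W c else 0))"
    by (rule ssum_swap)
  also have "\<dots> = ssum (\<lambda>c. if st c = x then C.W c else 0)"
  proof (rule ssum_cong)
    fix c
    show "ssum (\<lambda>y. if y \<in> V \<and> y \<noteq> x \<and> st c = x \<and> en c = y then C.W c else 0) = (if st c = x then C.W c else 0)"
    proof (cases "C.W c = 0")
      case True then show ?thesis by (simp cong: if_cong)
    next
      case False
      have "ssum (\<lambda>y. if y \<in> V \<and> y \<noteq> x \<and> st c = x \<and> en c = y then C.W c else 0) =
          ssum (\<lambda>y. if y = en c then (if st c = x then C.W c else 0) else 0)"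
        using cat_good[OF False] by (intro ssum_cong) auto
      then show ?thesis by (simp add: ssum_single)
    qed
  qed
  also have "\<dots> = ennreal (ap x)" by (rule SA[OF x])
  finally show ?thesis .
qed

lemma colsum_off: assumes y: "y \<in> V"
  shows "ssum (\<lambda>x. if x \<in> V \<and> x \<noteq> y then \<rho>off x y else 0) = ennreal (am y)"
proof -
  have "ssum (\<lambda>x. if x \<in> V \<and> x \<noteq> y then \<rho>off x y else 0) =
     ssum (\<lambda>x. ssum (\<lambda>c. if x \<in> V \<and> x \<noteq> y \<and> st c = x \<and> en c = y then C.W c else 0))"
    unfolding \<rho>off_def by (intro ssum_cong) auto
  also have "\<dots> = ssum (\<lambda>c. ssum (\<lambda>x. if x \<in> V \<and> x \<noteq> y \<and> st c = x \<and> en c = y then C.W c else 0))"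
    by (rule ssum_swap)
  also have "\<dots> = ssum (\<lambda>c. if en c = y then C.W c else 0)"
  proof (rule ssum_cong)
    fix c
    show "ssum (\<lambda>x. if x \<in> V \<and> x \<noteq> y \<and> st c = x \<and> en c = y then C.W c else 0) = (if en c = y then C.W c else 0)"
    proof (cases "C.W c = 0")
      case True then show ?thesis by (simp cong: if_cong)
    next
      case False
      have "ssum (\<lambda>x. if x \<in> V \<and> x \<noteq> y \<and> st c = x \<and> en c = y then C.W c else 0) =
          ssum (\<lambda>x. if x = st c then (if en c = y then C.W c else 0) else 0)"
        using cat_good[OF False] by (intro ssum_cong) auto
      then show ?thesis by (simp add: ssum_single)
    qed
  qed
  also have "\<dots> = ennreal (am y)" by (rule EA[OF y])
  finally show ?thesis .
qed

lemma \<rho>off_fin: assumes x: "x \<in> V" shows "\<rho>off x y \<noteq> \<infinity>"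
proof (cases "y \<in> V \<and> y \<noteq> x")
  case True
  have "\<rho>off x y \<le> ssum (\<lambda>y. if y \<in> V \<and> y \<noteq> x then \<rho>off x y else 0)"
    using ssum_ge[of "\<lambda>y. if y \<in> V \<and> y \<noteq> x then \<rho>off x y else 0" y] True by simp
  then show ?thesis using rowsum_off[OF x] by (auto simp: top_unique)
next
  case False
  have "\<rho>off x y = 0" unfolding \<rho>off_def
  proof (subst ssum_eq_0_iff, intro allI)
    fix c show "(if st c = x \<and> en c = y then C.W c else 0) = 0"
      using cat_good(5,7)[of c] False by (cases "C.W c = 0") auto
  qed
  then show ?thesis by simp
qed

lemma \<rho>off_enn: "x \<in> V \<Longrightarrow> ennreal (enn2real (\<rho>off x y)) = \<rho>off x y"
  using \<rho>off_fin by (simp add: ennreal_enn2real_if top.not_eq_extremum)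

lemma \<rho>_nn: "x \<in> V \<Longrightarrow> y \<in> V \<Longrightarrow> 0 \<le> \<rho> (x,y)"
  by (simp add: \<rho>_def mu1_nn mu2_nn)

lemma row: assumes x: "x \<in> V" shows "ssum (\<lambda>y. if y \<in> V then ennreal (\<rho> (x,y)) else 0) = ennreal (\<mu>1 x)"
proof -
  have "ssum (\<lambda>y. if y \<in> V then ennreal (\<rho> (x,y)) else 0) =
     ssum (\<lambda>y. (if y = x then ennreal (min (\<mu>1 x) (\<mu>2 x)) else 0) + (if y \<in> V \<and> y \<noteq> x then \<rho>off x y else 0))"
    using x by (intro ssum_cong) (auto simp: \<rho>_def \<rho>off_enn)
  also have "\<dots> = ennreal (min (\<mu>1 x) (\<mu>2 x)) + ennreal (ap x)"
    by (simp add: ssum_add ssum_single rowsum_off[OF x])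
  also have "\<dots> = ennreal (\<mu>1 x)" using mu1_nn[OF x] mu2_nn[OF x]
    by (simp add: ennreal_plus[symmetric] ap_def del: ennreal_plus)
  finally show ?thesis .
qed

lemma col: assumes y: "y \<in> V" shows "ssum (\<lambda>x. if x \<in> V then ennreal (\<rho> (x,y)) else 0) = ennreal (\<mu>2 y)"
proof -
  have "ssum (\<lambda>x. if x \<in> V then ennreal (\<rho> (x,y)) else 0) =
     ssum (\<lambda>x. (if x = y then ennreal (min (\<mu>1 y) (\<mu>2 y)) else 0) + (if x \<in> V \<and> x \<noteq> y then \<rho>off x y else 0))"
    using y by (intro ssum_cong) (auto simp: \<rho>_def \<rho>off_enn)
  also have "\<dots> = ennreal (min (\<mu>1 y) (\<mu>2 y)) + ennreal (am y)"
    by (simp add: ssum_add ssum_single colsum_off[OF y])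
  also have "\<dots> = ennreal (\<mu>2 y)" using mu1_nn[OF y] mu2_nn[OF y]
    by (simp add: ennreal_plus[symmetric] am_def del: ennreal_plus)
  finally show ?thesis .
qed

lemma coupling_ok: "coupling V \<mu>1 \<mu>2 \<rho>"
proof -
  have rows: "((\<lambda>y. \<rho> (x,y)) has_sum \<mu>1 x) V" if x: "x \<in> V" for x
    by (rule BR1[OF _ row[OF x]]) (use x \<rho>_nn mu1_nn mu2_nn in auto)
  have cols: "((\<lambda>x. \<rho> (x,y)) has_sum \<mu>2 y) V" if y: "y \<in> V" for y
    by (rule BR1[OF _ col[OF y]]) (use y \<rho>_nn mu1_nn mu2_nn in auto)
  have "ssum (\<lambda>p. if p \<in> V \<times> V then ennreal (\<rho> p) else 0) =
      ssum (\<lambda>x. ssum (\<lambda>y. if (x,y) \<in> V \<times> V then ennreal (\<rho> (x,y)) else 0))"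
    by (rule ssum_pair[symmetric])
  also have "\<dots> = ssum (\<lambda>x. if x \<in> V then ennreal (\<mu>1 x) else 0)"
    by (intro ssum_cong) (auto simp: row)
  also have "\<dots> = ennreal 1"
    by (rule BR2) (use mu1_nn pf1 in \<open>auto simp: prob_fun_def\<close>)
  finally have tot: "(\<rho> has_sum 1) (V \<times> V)"
    by (intro BR1) (auto simp: \<rho>_nn)
  show ?thesis unfolding coupling_def prob_fun_def using tot rows cols \<rho>_nn by auto
qed

lemma ap_le: "x \<in> V \<Longrightarrow> ap x \<le> \<mu>1 x" using mu1_nn mu2_nn by (simp add: ap_def)
lemma am_le: "x \<in> V \<Longrightarrow> am x \<le> \<mu>2 x" using mu1_nn mu2_nn by (simp add: am_def)

lemma half_TV: "(\<rho> has_sum ((1/2) * (\<Sum>\<^sub>\<infinity>x\<in>V. \<bar>\<mu>1 x - \<mu>2 x\<bar>))) Dset"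
proof -
  have h1: "(\<mu>1 has_sum 1) V" "(\<mu>2 has_sum 1) V" using pf1 pf2 by (auto simp: prob_fun_def)
  have "ap summable_on V"
    by (rule summable_on_comparison_test[of \<mu>1]) (use h1 ap_le ap_nn in \<open>auto simp: summable_on_def\<close>)
  then obtain Ap where hap: "(ap has_sum Ap) V" by (auto simp: summable_on_def)
  have "am summable_on V"
    by (rule summable_on_comparison_test[of \<mu>2]) (use h1 am_le am_nn in \<open>auto simp: summable_on_def\<close>)
  then obtain Am where ham: "(am has_sum Am) V" by (auto simp: summable_on_def)
  have d1: "((\<lambda>x. ap x + - am x) has_sum (Ap + - Am)) V"
    by (intro has_sum_add has_sum_uminusI hap ham)
  have d2: "((\<lambda>x. \<mu>1 x + - \<mu>2 x) has_sum (1 + - 1)) V"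
    by (intro has_sum_add has_sum_uminusI h1)
  have "(\<lambda>x. ap x + - am x) = (\<lambda>x. \<mu>1 x + - \<mu>2 x)" by (auto simp: ap_def am_def fun_eq_iff)
  then have "Ap + - Am = 1 + - 1" using d1 d2 has_sum_unique by metis
  then have eq: "Ap = Am" by simp
  have "((\<lambda>x. ap x + am x) has_sum (Ap + Am)) V" by (intro has_sum_add hap ham)
  moreover have "(\<lambda>x. ap x + am x) = (\<lambda>x. \<bar>\<mu>1 x - \<mu>2 x\<bar>)" by (auto simp: ap_def am_def fun_eq_iff)
  ultimately have "(\<Sum>\<^sub>\<infinity>x\<in>V. \<bar>\<mu>1 x - \<mu>2 x\<bar>) = Ap + Am" by (simp add: infsumI)
  then have val: "(1/2) * (\<Sum>\<^sub>\<infinity>x\<in>V. \<bar>\<mu>1 x - \<mu>2 x\<bar>) = Ap" using eq by simp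
  have Ap_nn: "0 \<le> Ap" using hap ap_nn has_sum_nonneg by blast
  have "ssum (\<lambda>p. if p \<in> Dset then ennreal (\<rho> p) else 0) =
      ssum (\<lambda>x. ssum (\<lambda>y. if (x,y) \<in> Dset then ennreal (\<rho> (x,y)) else 0))"
    by (rule ssum_pair[symmetric])
  also have "\<dots> = ssum (\<lambda>x. if x \<in> V then ssum (\<lambda>y. if y \<in> V \<and> y \<noteq> x then \<rho>off x y else 0) else 0)"
  proof (rule ssum_cong)
    fix x show "ssum (\<lambda>y. if (x,y) \<in> Dset then ennreal (\<rho> (x,y)) else 0) =
      (if x \<in> V then ssum (\<lambda>y. if y \<in> V \<and> y \<noteq> x then \<rho>off x y else 0) else 0)"
      by (cases "x \<in> V") (auto simp: Dset_def \<rho>_def \<rho>off_enn intro!: ssum_cong)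
  qed
  also have "\<dots> = ssum (\<lambda>x. if x \<in> V then ennreal (ap x) else 0)"
    by (intro ssum_cong) (simp add: rowsum_off)
  also have "\<dots> = ennreal Ap" by (rule BR2[OF _ hap]) (simp add: ap_nn)
  finally have "(\<rho> has_sum Ap) Dset"
    by (intro BR1[OF _ _ Ap_nn]) (auto simp: Dset_def \<rho>_nn)
  then show ?thesis using val by simp
qed

lemma Ix_mem: "i \<in> Ix p \<Longrightarrow> C.W (from_nat i) \<noteq> 0 \<and> st (from_nat i) = fst p \<and> en (from_nat i) = snd p"
  unfolding Ix_def by auto

lemma paths_ok:
  assumes xy: "x \<in> V" "y \<in> V" "x \<noteq> y"
  shows "(\<forall>i\<in>Ix (x,y). dpath V E (\<gamma>x (x,y) i) \<and> hd (\<gamma>x (x,y) i) = x \<and> last (\<gamma>x (x,y) i) = y \<and> wx (x,y) i \<ge> 0) \<and>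
     (wx (x,y) has_sum \<rho> (x,y)) (Ix (x,y))"
proof
  show "\<forall>i\<in>Ix (x,y). dpath V E (\<gamma>x (x,y) i) \<and> hd (\<gamma>x (x,y) i) = x \<and> last (\<gamma>x (x,y) i) = y \<and> wx (x,y) i \<ge> 0"
  proof
    fix i assume i: "i \<in> Ix (x,y)"
    note m = Ix_mem[OF i]
    then show "dpath V E (\<gamma>x (x,y) i) \<and> hd (\<gamma>x (x,y) i) = x \<and> last (\<gamma>x (x,y) i) = y \<and> wx (x,y) i \<ge> 0"
      using cat_good(1,3,4)[of "from_nat i"] by (simp add: \<gamma>x_def wx_def)
  qed
  have "ssum (\<lambda>i. if i \<in> Ix (x,y) then ennreal (wx (x,y) i) else 0) =
      ssum (\<lambda>c::nat list. (\<lambda>i. if i \<in> Ix (x,y) then ennreal (wx (x,y) i) else 0) (to_nat c))"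
    by (rule ssum_reindex[symmetric]) (auto simp: Ix_def rangeI)
  also have "\<dots> = ssum (\<lambda>c. if st c = x \<and> en c = y then C.W c else 0)"
  proof (rule ssum_cong)
    fix c :: "nat list"
    have "to_nat c \<in> Ix (x,y) \<longleftrightarrow> C.W c \<noteq> 0 \<and> st c = x \<and> en c = y"
      unfolding Ix_def by (auto simp: inj_image_mem_iff)
    then show "(if to_nat c \<in> Ix (x,y) then ennreal (wx (x,y) (to_nat c)) else 0) =
        (if st c = x \<and> en c = y then C.W c else 0)"
      by (auto simp: wx_def W_ennreal)
  qed
  also have "\<dots> = ennreal (\<rho> (x,y))" using xy by (simp add: \<rho>off_def[symmetric] \<rho>_def \<rho>off_enn)
  finally show "(wx (x,y) has_sum \<rho> (x,y)) (Ix (x,y))"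
    by (intro BR1) (auto simp: wx_def \<rho>_nn xy)
qed

lemma edges_ok:
  assumes e: "e \<in> E"
  shows "((\<lambda>(p,i). wx p i * path_flow (\<gamma>x p i) e) has_sum Q e) (SIGMA p:Dset. Ix p)"
proof -
  define F where "F = (\<lambda>pi. if pi \<in> (SIGMA p:Dset. Ix p) then ennreal ((\<lambda>(p,i). wx p i * path_flow (\<gamma>x p i) e) pi) else 0)"
  define hm where "hm c = ((st c, en c), to_nat c)" for c :: "nat list"
  have inj: "inj hm" unfolding hm_def inj_def by auto
  have out: "F pi = 0" if "pi \<notin> range hm" for pi
  proof -
    obtain p i where pi: "pi = (p,i)" by (cases pi)
    have "pi \<notin> (SIGMA p:Dset. Ix p)"
    proof
      assume "pi \<in> (SIGMA p:Dset. Ix p)"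
      then have "i \<in> Ix p" using pi by auto
      then have "st (from_nat i) = fst p" "en (from_nat i) = snd p" "i = to_nat (from_nat i :: nat list)"
        using Ix_mem[of i p] unfolding Ix_def by auto
      then have "pi = hm (from_nat i)" using pi by (simp add: hm_def)
      then show False using that by auto
    qed
    then show ?thesis by (simp add: F_def)
  qed
  have Fh: "F (hm c) = C.W c * ennreal (path_flow (catp g c) e)" for c
  proof (cases "C.W c = 0")
    case True
    then have "hm c \<notin> (SIGMA p:Dset. Ix p)" by (auto simp: hm_def Ix_def inj_image_mem_iff)
    then show ?thesis using True by (simp add: F_def)
  next
    case False
    have "hm c \<in> (SIGMA p:Dset. Ix p)"
      using cat_good(5,6,7)[OF False] False by (auto simp: hm_def Ix_def Dset_def)
    then show ?thesis
      by (simp add: F_def hm_def wx_def \<gamma>x_def ennreal_mult pf_nn W_ennreal)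
  qed
  have "ssum F = ssum (\<lambda>c. F (hm c))" by (rule ssum_reindex[symmetric, OF inj out])
  also have "\<dots> = ennreal (Q e)" by (simp add: Fh edge_formula[OF e])
  finally show ?thesis unfolding F_def
    by (intro BR1) (auto simp: wx_def pf_nn Q_nn[OF e])
qed

lemma main:
  "\<exists>\<rho> (I :: 'v \<times> 'v \<Rightarrow> nat set) (\<gamma> :: 'v \<times> 'v \<Rightarrow> nat \<Rightarrow> 'v list)
            (w :: 'v \<times> 'v \<Rightarrow> nat \<Rightarrow> real).
     coupling V \<mu>1 \<mu>2 \<rho> \<and>
     (\<forall>x\<in>V. \<forall>y\<in>V. x \<noteq> y \<longrightarrow>
        (\<forall>i\<in>I (x,y). dpath V E (\<gamma> (x,y) i) \<and> hd (\<gamma> (x,y) i) = x \<and>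
                      last (\<gamma> (x,y) i) = y \<and> w (x,y) i \<ge> 0) \<and>
        (w (x,y) has_sum \<rho> (x,y)) (I (x,y))) \<and>
     (\<forall>e\<in>E. ((\<lambda>(p,i). w p i * path_flow (\<gamma> p i) e) has_sum Q e)
              (SIGMA p:{(x,y). x \<in> V \<and> y \<in> V \<and> x \<noteq> y}. I p)) \<and>
     (\<rho> has_sum ((1/2) * (\<Sum>\<^sub>\<infinity>x\<in>V. \<bar>\<mu>1 x - \<mu>2 x\<bar>)))
        {(x,y). x \<in> V \<and> y \<in> V \<and> x \<noteq> y}"
  apply (rule exI[where x=\<rho>], rule exI[where x=Ix], rule exI[where x=\<gamma>x], rule exI[where x=wx])
  apply (intro conjI)
  subgoal by (rule coupling_ok)
  subgoal using paths_ok by blast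
  subgoal using edges_ok unfolding Dset_def by blast
  subgoal using half_TV unfolding Dset_def by simp
  done

end

theorem theorem3p9:
  fixes V :: "'v set" and E :: "('v \<times> 'v) set"
    and \<mu>1 \<mu>2 :: "'v \<Rightarrow> real" and Q :: "'v \<times> 'v \<Rightarrow> real"
  assumes "countable V" and "infinite V" and "E \<subseteq> V \<times> V"
    and "prob_fun V \<mu>1" and "prob_fun V \<mu>2"
    and "is_flow E Q" and "finitely_decomposable V E Q" and "acyclic_flow E Q"
    and "\<forall>x\<in>V. divergence E Q x = \<mu>1 x - \<mu>2 x"
  shows "\<exists>\<rho> (I :: 'v \<times> 'v \<Rightarrow> nat set) (\<gamma> :: 'v \<times> 'v \<Rightarrow> nat \<Rightarrow> 'v list)
            (w :: 'v \<times> 'v \<Rightarrow> nat \<Rightarrow> real).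
     coupling V \<mu>1 \<mu>2 \<rho> \<and>
     (\<forall>x\<in>V. \<forall>y\<in>V. x \<noteq> y \<longrightarrow>
        (\<forall>i\<in>I (x,y). dpath V E (\<gamma> (x,y) i) \<and> hd (\<gamma> (x,y) i) = x \<and>
                      last (\<gamma> (x,y) i) = y \<and> w (x,y) i \<ge> 0) \<and>
        (w (x,y) has_sum \<rho> (x,y)) (I (x,y))) \<and>
     (\<forall>e\<in>E. ((\<lambda>(p,i). w p i * path_flow (\<gamma> p i) e) has_sum Q e)
              (SIGMA p:{(x,y). x \<in> V \<and> y \<in> V \<and> x \<noteq> y}. I p)) \<and>
     (\<rho> has_sum ((1/2) * (\<Sum>\<^sub>\<infinity>x\<in>V. \<bar>\<mu>1 x - \<mu>2 x\<bar>)))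
        {(x,y). x \<in> V \<and> y \<in> V \<and> x \<noteq> y}"
proof -
  obtain g qq where gq: "\<forall>n. qq n \<ge> 0 \<and> sa_dpath V E (g n)" "summable qq"
      "\<forall>e\<in>E. (\<lambda>n. qq n * path_flow (g n) e) sums Q e"
    using assms(7) unfolding finitely_decomposable_def by blast
  interpret fs V E \<mu>1 \<mu>2 Q g qq
    by unfold_locales (use assms gq in auto)
  show ?thesis by (rule main)
qed

end
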